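(* Let $\lambda\in K$ be invertible and $T=\{D(x)D(y)+\lambda^{-1}D(x)y+\lambda^{-1}xD(y)-\lambda^{-1}D(xy)\mid x,y\in\mathfrak{S}(X)\}$. Then $K\langle X;D|T\rangle=K\langle X;D\rangle/Id(T)$ is a free $\lambda$-differential algebra on the set $X$ with $K$-basis $\Phi(X)$.
   Context: $K$ is a commutative ring with unit. A $\lambda$-differential algebra is an associative $K$-algebra $R$ with a $K$-linear $D:R\to R$ satisfying $D(xy)=D(x)y+xD(y)+\lambda D(x)D(y)$; free on $X$ means every map from $X$ to such an algebra extends uniquely to a homomorphism commuting with $D$. $S(Y)$ free semigroup; $\mathfrak{S}_0=S(X)$, $\mathfrak{S}_n=S(X\cup\{D(u)\mid u\in\mathfrak{S}_{n-1}\})$, $\mathfrak{S}(X)=\bigcup_n\mathfrak{S}_n$; $K\langle X;D\rangle$ free $K$-module on $\mathfrak{S}(X)$ with concatenation product and $D$ extended linearly; $Id(T)$ is the $K$-span of all $u|_t$, $u$ a word on $X\cup\{\star\}$ with exactly one $\star$, $t\in T$ substituted for $\star$. For $Y,Z\subseteq\mathfrak{S}(X)$: $\Lambda^D_X(Y,Z)=\bigcup_{r\ge1}(YD(Z))^r\cup\bigcup_{r\ge0}(YD(Z))^rY\cup\bigcup_{r\ge1}(D(Z)Y)^r\cup\bigcup_{r\ge0}(D(Z)Y)^rD(Z)$; $\Phi_0=S(X)$, $\Phi_n=\Lambda^D_X(\Phi_0,\Phi_{n-1})$, $\Phi(X)=\bigcup_{n\ge0}\Phi_n$. *)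

theory Defs
  imports Main
begin

text \<open>A letter is either a generator x or a bracketed word D(u).
  A bracketed word is a nonempty list of letters.\<close>

datatype 'x letter = Lx 'x | LD "'x letter list"

fun wfl :: "'x set \<Rightarrow> 'x letter \<Rightarrow> bool" where
  "wfl X (Lx x) = (x \<in> X)"
| "wfl X (LD w) = (w \<noteq> [] \<and> list_all (wfl X) w)"

text \<open>frakS(X) = union of all frakS_n.\<close>
definition frakS :: "'x set \<Rightarrow> 'x letter list set" where
  "frakS X = {w. w \<noteq> [] \<and> list_all (wfl X) w}"

text \<open>The free semigroup S(X), as words of plain generators.\<close>
definition Sg :: "'x set \<Rightarrow> 'x letter list set" where
  "Sg X = {w. w \<noteq> [] \<and> set w \<subseteq> Lx ` X}"

section \<open>The free module K<X;D> on frakS(X)\<close>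

type_synonym ('x, 'k) poly = "'x letter list \<Rightarrow> 'k"

definition KXD :: "'x set \<Rightarrow> ('x, 'k::zero) poly set" where
  "KXD X = {p. finite {w. p w \<noteq> 0} \<and> (\<forall>w. p w \<noteq> 0 \<longrightarrow> w \<in> frakS X)}"

definition pzero :: "('x, 'k::zero) poly" where
  "pzero = (\<lambda>_. 0)"

definition padd :: "('x, 'k::plus) poly \<Rightarrow> ('x, 'k) poly \<Rightarrow> ('x, 'k) poly" where
  "padd p q = (\<lambda>w. p w + q w)"

definition psub :: "('x, 'k::minus) poly \<Rightarrow> ('x, 'k) poly \<Rightarrow> ('x, 'k) poly" where
  "psub p q = (\<lambda>w. p w - q w)"

definition psmul :: "'k::times \<Rightarrow> ('x, 'k) poly \<Rightarrow> ('x, 'k) poly" where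
  "psmul k p = (\<lambda>w. k * p w)"

definition pmul :: "('x, 'k::comm_semiring_1) poly \<Rightarrow> ('x, 'k) poly \<Rightarrow> ('x, 'k) poly" where
  "pmul p q = (\<lambda>w. \<Sum>i\<in>{0..length w}. p (take i w) * q (drop i w))"

fun unD :: "'x letter list \<Rightarrow> 'x letter list option" where
  "unD [LD u] = Some u"
| "unD _ = None"

text \<open>The operator D, extended linearly: D(u) is the one-letter word [LD u].\<close>
definition pD :: "('x, 'k::zero) poly \<Rightarrow> ('x, 'k) poly" where
  "pD p = (\<lambda>w. case unD w of Some u \<Rightarrow> p u | None \<Rightarrow> 0)"

definition pmono :: "'x letter list \<Rightarrow> ('x, 'k::zero_neq_one) poly" where
  "pmono w = (\<lambda>v. if v = w then 1 else 0)"

section \<open>The set T and the operated ideal Id(T)\<close>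

text \<open>T, with mu playing the role of lambda^{-1}.\<close>
definition Tset :: "'x set \<Rightarrow> 'k::comm_ring_1 \<Rightarrow> ('x, 'k) poly set" where
  "Tset X mu = {psub (padd (padd (pmul (pD (pmono x)) (pD (pmono y)))
                                  (psmul mu (pmul (pD (pmono x)) (pmono y))))
                            (psmul mu (pmul (pmono x) (pD (pmono y)))))
                      (psmul mu (pD (pmul (pmono x) (pmono y))))
               | x y. x \<in> frakS X \<and> y \<in> frakS X}"

fun prodl :: "('x, 'k::comm_semiring_1) poly list \<Rightarrow> ('x, 'k) poly" where
  "prodl [] = pzero"
| "prodl [p] = p"
| "prodl (p # q # ps) = pmul p (prodl (q # ps))"

text \<open>Words on X \<union> {star}: the letter Lx None is the star.
  subst_letter t replaces the star by t (extended multilinearly).\<close>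
fun subst_letter :: "('x, 'k::comm_ring_1) poly \<Rightarrow> 'x option letter \<Rightarrow> ('x, 'k) poly" where
  "subst_letter t (Lx None) = t"
| "subst_letter t (Lx (Some x)) = pmono [Lx x]"
| "subst_letter t (LD w) = pD (prodl (map (subst_letter t) w))"

definition subst_word :: "('x, 'k::comm_ring_1) poly \<Rightarrow> 'x option letter list \<Rightarrow> ('x, 'k) poly" where
  "subst_word t u = prodl (map (subst_letter t) u)"

fun nstar :: "'x option letter \<Rightarrow> nat" where
  "nstar (Lx None) = 1"
| "nstar (Lx (Some x)) = 0"
| "nstar (LD w) = sum_list (map nstar w)"

definition nstar_word :: "'x option letter list \<Rightarrow> nat" where
  "nstar_word u = sum_list (map nstar u)"

inductive_set kspan :: "('x, 'k::comm_ring_1) poly set \<Rightarrow> ('x, 'k) poly set" for S where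
  kspan_zero: "pzero \<in> kspan S"
| kspan_step: "p \<in> S \<Longrightarrow> q \<in> kspan S \<Longrightarrow> padd (psmul k p) q \<in> kspan S"

definition IdT :: "'x set \<Rightarrow> ('x, 'k::comm_ring_1) poly set \<Rightarrow> ('x, 'k) poly set" where
  "IdT X T = kspan {subst_word t u | u t.
                     u \<in> frakS (insert None (Some ` X)) \<and> nstar_word u = 1 \<and> t \<in> T}"

definition catset :: "'a list set \<Rightarrow> 'a list set \<Rightarrow> 'a list set" where
  "catset A B = {a @ b | a b. a \<in> A \<and> b \<in> B}"

fun setpow :: "'a list set \<Rightarrow> nat \<Rightarrow> 'a list set" where
  "setpow A 0 = {[]}"
| "setpow A (Suc n) = catset A (setpow A n)"

definition DZ :: "'x letter list set \<Rightarrow> 'x letter list set" where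
  "DZ Z = {[LD z] | z. z \<in> Z}"

definition LambdaD :: "'x letter list set \<Rightarrow> 'x letter list set \<Rightarrow> 'x letter list set" where
  "LambdaD Y Z =
     (\<Union>r\<in>{1..}. setpow (catset Y (DZ Z)) r)
   \<union> (\<Union>r. catset (setpow (catset Y (DZ Z)) r) Y)
   \<union> (\<Union>r\<in>{1..}. setpow (catset (DZ Z) Y) r)
   \<union> (\<Union>r. catset (setpow (catset (DZ Z) Y) r) (DZ Z))"

fun PhiN :: "'x set \<Rightarrow> nat \<Rightarrow> 'x letter list set" where
  "PhiN X 0 = Sg X"
| "PhiN X (Suc n) = LambdaD (Sg X) (PhiN X n)"

definition Phi :: "'x set \<Rightarrow> 'x letter list set" where
  "Phi X = (\<Union>n. PhiN X n)"

section \<open>Lambda-differential algebras (associative, not necessarily unital)\<close>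

record ('k, 'a) kdalg =
  carrier :: "'a set"
  add :: "'a \<Rightarrow> 'a \<Rightarrow> 'a"
  zero :: 'a
  mult :: "'a \<Rightarrow> 'a \<Rightarrow> 'a"
  smul :: "'k \<Rightarrow> 'a \<Rightarrow> 'a"
  der :: "'a \<Rightarrow> 'a"

definition kalgebra :: "('k::comm_ring_1, 'a) kdalg \<Rightarrow> bool" where
  "kalgebra A \<longleftrightarrow>
     zero A \<in> carrier A
   \<and> (\<forall>a\<in>carrier A. \<forall>b\<in>carrier A. add A a b \<in> carrier A)
   \<and> (\<forall>a\<in>carrier A. \<forall>b\<in>carrier A. mult A a b \<in> carrier A)
   \<and> (\<forall>k. \<forall>a\<in>carrier A. smul A k a \<in> carrier A)
   \<and> (\<forall>a\<in>carrier A. \<forall>b\<in>carrier A. \<forall>c\<in>carrier A. add A (add A a b) c = add A a (add A b c))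
   \<and> (\<forall>a\<in>carrier A. \<forall>b\<in>carrier A. add A a b = add A b a)
   \<and> (\<forall>a\<in>carrier A. add A (zero A) a = a)
   \<and> (\<forall>a\<in>carrier A. \<exists>b\<in>carrier A. add A a b = zero A)
   \<and> (\<forall>k. \<forall>a\<in>carrier A. \<forall>b\<in>carrier A. smul A k (add A a b) = add A (smul A k a) (smul A k b))
   \<and> (\<forall>k l. \<forall>a\<in>carrier A. smul A (k + l) a = add A (smul A k a) (smul A l a))
   \<and> (\<forall>k l. \<forall>a\<in>carrier A. smul A (k * l) a = smul A k (smul A l a))
   \<and> (\<forall>a\<in>carrier A. smul A 1 a = a)
   \<and> (\<forall>a\<in>carrier A. \<forall>b\<in>carrier A. \<forall>c\<in>carrier A. mult A (mult A a b) c = mult A a (mult A b c))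
   \<and> (\<forall>a\<in>carrier A. \<forall>b\<in>carrier A. \<forall>c\<in>carrier A. mult A a (add A b c) = add A (mult A a b) (mult A a c))
   \<and> (\<forall>a\<in>carrier A. \<forall>b\<in>carrier A. \<forall>c\<in>carrier A. mult A (add A a b) c = add A (mult A a c) (mult A b c))
   \<and> (\<forall>k. \<forall>a\<in>carrier A. \<forall>b\<in>carrier A. smul A k (mult A a b) = mult A (smul A k a) b)
   \<and> (\<forall>k. \<forall>a\<in>carrier A. \<forall>b\<in>carrier A. smul A k (mult A a b) = mult A a (smul A k b))"

definition lambda_diff_alg :: "'k::comm_ring_1 \<Rightarrow> ('k, 'a) kdalg \<Rightarrow> bool" where
  "lambda_diff_alg lam A \<longleftrightarrow>
     kalgebra A
   \<and> (\<forall>a\<in>carrier A. der A a \<in> carrier A)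
   \<and> (\<forall>a\<in>carrier A. \<forall>b\<in>carrier A. der A (add A a b) = add A (der A a) (der A b))
   \<and> (\<forall>k. \<forall>a\<in>carrier A. der A (smul A k a) = smul A k (der A a))
   \<and> (\<forall>a\<in>carrier A. \<forall>b\<in>carrier A.
        der A (mult A a b) =
          add A (add A (mult A (der A a) b) (mult A a (der A b)))
                (smul A lam (mult A (der A a) (der A b))))"

definition dhom :: "('k::comm_ring_1, 'a) kdalg \<Rightarrow> ('k, 'b) kdalg \<Rightarrow> ('a \<Rightarrow> 'b) \<Rightarrow> bool" where
  "dhom A R h \<longleftrightarrow>
     (\<forall>a\<in>carrier A. h a \<in> carrier R)
   \<and> (\<forall>a\<in>carrier A. \<forall>b\<in>carrier A. h (add A a b) = add R (h a) (h b))
   \<and> (\<forall>k. \<forall>a\<in>carrier A. h (smul A k a) = smul R k (h a))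
   \<and> (\<forall>a\<in>carrier A. \<forall>b\<in>carrier A. h (mult A a b) = mult R (h a) (h b))
   \<and> (\<forall>a\<in>carrier A. h (der A a) = der R (h a))"

text \<open>Free lambda-differential algebra on the set X (with structure map i),
  tested against all lambda-differential algebras whose elements live in type 'r.
  A free type variable 'r in a theorem is universally quantified.\<close>
definition free_lda :: "'r itself \<Rightarrow> 'k::comm_ring_1 \<Rightarrow> ('k, 'a) kdalg \<Rightarrow> 'x set \<Rightarrow> ('x \<Rightarrow> 'a) \<Rightarrow> bool" where
  "free_lda _ lam A X i \<longleftrightarrow>
     lambda_diff_alg lam A
   \<and> (\<forall>x\<in>X. i x \<in> carrier A)
   \<and> (\<forall>(R :: ('k, 'r) kdalg) f. lambda_diff_alg lam R \<and> (\<forall>x\<in>X. f x \<in> carrier R) \<longrightarrow>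
        (\<exists>h. dhom A R h \<and> (\<forall>x\<in>X. h (i x) = f x))
      \<and> (\<forall>h1 h2. dhom A R h1 \<and> dhom A R h2 \<and> (\<forall>x\<in>X. h1 (i x) = f x) \<and> (\<forall>x\<in>X. h2 (i x) = f x)
                 \<longrightarrow> (\<forall>a\<in>carrier A. h1 a = h2 a)))"

definition lincomb :: "('k, 'a) kdalg \<Rightarrow> ('i \<Rightarrow> 'a) \<Rightarrow> ('i \<times> 'k) list \<Rightarrow> 'a" where
  "lincomb A b ps = foldr (\<lambda>(i, k) acc. add A (smul A k (b i)) acc) ps (zero A)"

definition is_kbasis :: "('k::comm_ring_1, 'a) kdalg \<Rightarrow> 'i set \<Rightarrow> ('i \<Rightarrow> 'a) \<Rightarrow> bool" where
  "is_kbasis A I b \<longleftrightarrow>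
     (\<forall>i\<in>I. b i \<in> carrier A)
   \<and> (\<forall>a\<in>carrier A. \<exists>ps. set (map fst ps) \<subseteq> I \<and> a = lincomb A b ps)
   \<and> (\<forall>ps. distinct (map fst ps) \<and> set (map fst ps) \<subseteq> I \<and> lincomb A b ps = zero A
           \<longrightarrow> (\<forall>(i, k)\<in>set ps. k = 0))"

section \<open>The quotient K<X;D|T> = K<X;D> / Id(T)\<close>

definition cls :: "'x set \<Rightarrow> ('x, 'k::comm_ring_1) poly set \<Rightarrow> ('x, 'k) poly \<Rightarrow> ('x, 'k) poly set" where
  "cls X I p = {q \<in> KXD X. psub q p \<in> I}"

definition rep :: "'a set \<Rightarrow> 'a" where
  "rep C = (SOME p. p \<in> C)"

definition quot :: "'x set \<Rightarrow> ('x, 'k::comm_ring_1) poly set \<Rightarrow> ('k, ('x, 'k) poly set) kdalg" where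
  "quot X I =
     \<lparr> carrier = cls X I ` KXD X,
       add = (\<lambda>C1 C2. cls X I (padd (rep C1) (rep C2))),
       zero = cls X I pzero,
       mult = (\<lambda>C1 C2. cls X I (pmul (rep C1) (rep C2))),
       smul = (\<lambda>k C. cls X I (psmul k (rep C))),
       der = (\<lambda>C. cls X I (pD (rep C))) \<rparr>"

definition KXDT :: "'x set \<Rightarrow> 'k::comm_ring_1 \<Rightarrow> ('k, ('x, 'k) poly set) kdalg" where
  "KXDT X mu = quot X (IdT X (Tset X mu))"

end

theory Submission
  imports Defs
begin

definition cmul :: "('a list \<Rightarrow> 'k::comm_semiring_1) \<Rightarrow> ('a list \<Rightarrow> 'k) \<Rightarrow> ('a list \<Rightarrow> 'k)" where
  "cmul p q = (\<lambda>w. \<Sum>i\<in>{0..length w}. p (take i w) * q (drop i w))"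

definition cmono :: "'a list \<Rightarrow> 'a list \<Rightarrow> 'k::zero_neq_one" where
  "cmono u = (\<lambda>v. if v = u then 1 else 0)"

definition S2 :: "'a list \<Rightarrow> ('a list \<times> 'a list) set" where
  "S2 w = {(u,v). u @ v = w}"

lemma S2_img: "S2 w = (\<lambda>i. (take i w, drop i w)) ` {0..length w}"
  unfolding S2_def
  apply (auto simp: append_eq_conv_conj image_iff)
  subgoal for a by (rule bexI[of _ "length a"], simp, drule arg_cong[of _ _ length], auto)
  done

lemma S2_finite[simp]: "finite (S2 w)"
  by (simp add: S2_img)

lemma cmul_alt: "cmul p q w = (\<Sum>(u,v)\<in>S2 w. p u * q v)"
  unfolding cmul_def S2_def
  apply (rule sum.reindex_bij_witness[of _ "\<lambda>(u,v). length u" "\<lambda>i. (take i w, drop i w)"])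
  by auto

definition S3 :: "'a list \<Rightarrow> ('a list \<times> 'a list \<times> 'a list) set" where
  "S3 w = {(a,b,c). a @ b @ c = w}"

lemma cmul_assoc: "cmul (cmul p q) r = cmul p (cmul q r)"
proof
  fix w
  have "cmul (cmul p q) r w = (\<Sum>x\<in>S2 w. (\<Sum>y\<in>S2 (fst x). p (fst y) * q (snd y)) * r (snd x))"
    by (simp add: cmul_alt split_def)
  also have "\<dots> = (\<Sum>x\<in>S2 w. \<Sum>y\<in>S2 (fst x). p (fst y) * q (snd y) * r (snd x))"
    by (simp add: sum_distrib_right)
  also have "\<dots> = (\<Sum>(x,y)\<in>Sigma (S2 w) (\<lambda>x. S2 (fst x)). p (fst y) * q (snd y) * r (snd x))"
    by (rule sum.Sigma) auto
  also have "\<dots> = (\<Sum>(a,b,c)\<in>S3 w. p a * q b * r c)"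
    apply (rule sum.reindex_bij_witness[of _ "\<lambda>(a,b,c). ((a@b,c),(a,b))" "\<lambda>((s,c),(a,b)). (a,b,c)"])
    by (auto simp: S2_def S3_def)
  finally have L: "cmul (cmul p q) r w = (\<Sum>(a,b,c)\<in>S3 w. p a * q b * r c)" .
  have "cmul p (cmul q r) w = (\<Sum>x\<in>S2 w. p (fst x) * (\<Sum>y\<in>S2 (snd x). q (fst y) * r (snd y)))"
    by (simp add: cmul_alt split_def)
  also have "\<dots> = (\<Sum>x\<in>S2 w. \<Sum>y\<in>S2 (snd x). p (fst x) * q (fst y) * r (snd y))"
    by (simp add: sum_distrib_left mult.assoc)
  also have "\<dots> = (\<Sum>(x,y)\<in>Sigma (S2 w) (\<lambda>x. S2 (snd x)). p (fst x) * q (fst y) * r (snd y))"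
    by (rule sum.Sigma) auto
  also have "\<dots> = (\<Sum>(a,b,c)\<in>S3 w. p a * q b * r c)"
    apply (rule sum.reindex_bij_witness[of _ "\<lambda>(a,b,c). ((a,b@c),(b,c))" "\<lambda>((a,t),(b,c)). (a,b,c)"])
    by (auto simp: S2_def S3_def)
  finally show "cmul (cmul p q) r w = cmul p (cmul q r) w" using L by simp
qed

lemma cmul_mono: "cmul (cmono u) (cmono v) = (cmono (u @ v) :: 'a list \<Rightarrow> 'k::comm_semiring_1)"
proof
  fix w
  have "cmul (cmono u) (cmono v) w = (\<Sum>x\<in>S2 w. if x = (u,v) then (1::'k) else 0)"
    unfolding cmul_alt cmono_def by (rule sum.cong) (auto split: if_splits)
  also have "\<dots> = cmono (u@v) w"
    by (subst sum.delta) (simp, auto simp: S2_def cmono_def)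
  finally show "cmul (cmono u) (cmono v) w = (cmono (u @ v) w :: 'k)" .
qed

lemma cmul_add_left: "cmul (\<lambda>w. p w + q w) r = (\<lambda>w. cmul p r w + cmul q r w)"
  by (simp add: cmul_def fun_eq_iff distrib_right sum.distrib)
lemma cmul_add_right: "cmul r (\<lambda>w. p w + q w) = (\<lambda>w. cmul r p w + cmul r q w)"
  by (simp add: cmul_def fun_eq_iff distrib_left sum.distrib)
lemma cmul_smul_left: "cmul (\<lambda>w. k * p w) r = (\<lambda>w. k * cmul p r w)"
  by (simp add: cmul_def fun_eq_iff sum_distrib_left mult.assoc)
lemma cmul_smul_right: "cmul r (\<lambda>w. k * p w) = (\<lambda>w. k * cmul r p w)"
  by (simp add: cmul_def fun_eq_iff sum_distrib_left mult.assoc mult.left_commute)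
lemma cmul_zero_left[simp]: "cmul (\<lambda>w. 0) r = (\<lambda>w. 0)"
  by (simp add: cmul_def fun_eq_iff)
lemma cmul_zero_right[simp]: "cmul r (\<lambda>w. 0) = (\<lambda>w. 0)"
  by (simp add: cmul_def fun_eq_iff)

lemma cmul_supp: "cmul p q w \<noteq> 0 \<Longrightarrow> \<exists>u v. w = u @ v \<and> p u \<noteq> 0 \<and> q v \<noteq> 0"
  unfolding cmul_def
  by (metis (no_types, lifting) append_take_drop_id mult_not_zero sum.neutral)

lemma cmul_finite:
  assumes "finite {w. p w \<noteq> 0}" "finite {w. q w \<noteq> 0}"
  shows "finite {w. cmul p q w \<noteq> 0}"
proof -
  have "{w. cmul p q w \<noteq> 0} \<subseteq> (\<lambda>(u,v). u @ v) ` ({w. p w \<noteq> 0} \<times> {w. q w \<noteq> 0})"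
    by (auto dest!: cmul_supp)
  then show ?thesis using assms finite_subset by blast
qed


lemma pmul_eq: "pmul = cmul"
  by (simp add: pmul_def cmul_def fun_eq_iff)
lemma pmono_eq: "pmono = cmono"
  by (simp add: pmono_def cmono_def fun_eq_iff)

lemma pmul_mono[simp]: "pmul (pmono u) (pmono v) = pmono (u @ v)"
  by (simp add: pmul_eq pmono_eq cmul_mono)

lemma pmul_assoc: "pmul (pmul p q) r = pmul p (pmul q r)"
  by (simp add: pmul_eq cmul_assoc)

lemma pmul_padd_left: "pmul (padd p q) r = padd (pmul p r) (pmul q r)"
  by (simp add: pmul_eq padd_def cmul_add_left)
lemma pmul_padd_right: "pmul r (padd p q) = padd (pmul r p) (pmul r q)"
  by (simp add: pmul_eq padd_def cmul_add_right)
lemma pmul_psmul_left: "pmul (psmul k p) r = psmul k (pmul p r)"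
  by (simp add: pmul_eq psmul_def cmul_smul_left)
lemma pmul_psmul_right: "pmul r (psmul k p) = psmul k (pmul r p)"
  by (simp add: pmul_eq psmul_def cmul_smul_right)
lemma pmul_pzero_left[simp]: "pmul pzero r = pzero"
  by (simp add: pmul_eq pzero_def)
lemma pmul_pzero_right[simp]: "pmul r pzero = pzero"
  by (simp add: pmul_eq pzero_def)
lemma psub_as_padd: "psub p (q :: ('x,'k::comm_ring_1) poly) = padd p (psmul (-1) q)"
  by (simp add: psub_def padd_def psmul_def fun_eq_iff)
lemma pmul_psub_left: "pmul (psub p q) (r::('x,'k::comm_ring_1) poly) = psub (pmul p r) (pmul q r)"
  by (simp add: psub_as_padd pmul_padd_left pmul_psmul_left)
lemma pmul_psub_right: "pmul (r::('x,'k::comm_ring_1) poly) (psub p q) = psub (pmul r p) (pmul r q)"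
  by (simp add: psub_as_padd pmul_padd_right pmul_psmul_right)

lemma pD_padd: "pD (padd (p::('x,'k::comm_ring_1) poly) q) = padd (pD p) (pD q)"
  by (auto simp: pD_def padd_def fun_eq_iff split: option.splits)
lemma pD_psmul: "pD (psmul k (p::('x,'k::comm_ring_1) poly)) = psmul k (pD p)"
  by (auto simp: pD_def psmul_def fun_eq_iff split: option.splits)
lemma pD_psub: "pD (psub p q) = psub (pD p) (pD (q::('x,'k::comm_ring_1) poly))"
  by (auto simp: pD_def psub_def fun_eq_iff split: option.splits)
lemma pD_pzero[simp]: "pD pzero = (pzero::('x,'k::comm_ring_1) poly)"
  by (auto simp: pD_def pzero_def fun_eq_iff split: option.splits)
lemma unD_Some: "unD w = Some u \<longleftrightarrow> w = [LD u]"
  by (cases w rule: unD.cases) auto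
lemma pD_pmono[simp]: "pD (pmono u) = (pmono [LD u] :: ('x,'k::comm_ring_1) poly)"
  by (auto simp: pD_def pmono_def fun_eq_iff unD_Some split: option.splits)

lemma padd_pzero[simp]: "padd pzero p = (p::('x,'k::comm_ring_1) poly)" "padd p pzero = (p::('x,'k::comm_ring_1) poly)"
  by (simp_all add: padd_def pzero_def)
lemma psmul_pzero[simp]: "psmul k pzero = (pzero :: ('x,'k::comm_ring_1) poly)"
  by (simp add: psmul_def pzero_def)
lemma psmul_one[simp]: "psmul 1 p = (p :: ('x,'k::comm_ring_1) poly)"
  by (simp add: psmul_def)
lemma psmul_zero[simp]: "psmul 0 p = (pzero :: ('x,'k::comm_ring_1) poly)"
  by (simp add: psmul_def pzero_def)

lemma frakS_append: "u \<in> frakS X \<Longrightarrow> v \<in> frakS X \<Longrightarrow> u @ v \<in> frakS X"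
  by (simp add: frakS_def)
lemma frakS_Cons: "a # v \<in> frakS X \<longleftrightarrow> wfl X a \<and> (v = [] \<or> v \<in> frakS X)"
  by (auto simp: frakS_def)
lemma frakS_LD: "[LD u] \<in> frakS X \<longleftrightarrow> u \<in> frakS X"
  by (simp add: frakS_def)
lemma frakS_single: "[a] \<in> frakS X \<longleftrightarrow> wfl X a"
  by (simp add: frakS_def)

lemma KXD_iff: "p \<in> KXD X \<longleftrightarrow> finite {w. p w \<noteq> 0} \<and> (\<forall>w. p w \<noteq> 0 \<longrightarrow> w \<in> frakS X)"
  by (simp add: KXD_def)

lemma KXD_pzero[simp]: "(pzero::('x,'k::comm_ring_1) poly) \<in> KXD X"
  by (simp add: KXD_def pzero_def)
lemma KXD_padd: "(p::('x,'k::comm_ring_1) poly) \<in> KXD X \<Longrightarrow> q \<in> KXD X \<Longrightarrow> padd p q \<in> KXD X"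
proof -
  assume a: "p \<in> KXD X" "q \<in> KXD X"
  have "{w. p w + q w \<noteq> 0} \<subseteq> {w. p w \<noteq> 0} \<union> {w. q w \<noteq> 0}" by auto
  moreover have "\<forall>w. p w + q w \<noteq> 0 \<longrightarrow> w \<in> frakS X"
    using a by (metis KXD_iff add.right_neutral)
  ultimately show ?thesis using a unfolding KXD_iff padd_def by (auto elim: finite_subset)
qed
lemma KXD_psmul: "(p::('x,'k::comm_ring_1) poly) \<in> KXD X \<Longrightarrow> psmul k p \<in> KXD X"
proof -
  assume a: "p \<in> KXD X"
  have "{w. k * p w \<noteq> 0} \<subseteq> {w. p w \<noteq> 0}" by auto
  moreover have "\<forall>w. k * p w \<noteq> 0 \<longrightarrow> w \<in> frakS X"
    using a by (metis KXD_iff mult_zero_right)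
  ultimately show ?thesis using a unfolding KXD_iff psmul_def by (auto elim: finite_subset)
qed
lemma KXD_psub: "p \<in> KXD X \<Longrightarrow> q \<in> KXD X \<Longrightarrow> psub p (q::('x,'k::comm_ring_1) poly) \<in> KXD X"
  by (simp add: psub_as_padd KXD_padd KXD_psmul)
lemma KXD_pmono: "w \<in> frakS X \<Longrightarrow> (pmono w :: ('x,'k::comm_ring_1) poly) \<in> KXD X"
  unfolding KXD_def pmono_def by auto
lemma KXD_pmul: "(p::('x,'k::comm_ring_1) poly) \<in> KXD X \<Longrightarrow> q \<in> KXD X \<Longrightarrow> pmul p q \<in> KXD X"
  unfolding KXD_iff pmul_eq
  by (auto intro: cmul_finite dest!: cmul_supp simp: frakS_append)
lemma KXD_pD: "(p::('x,'k::comm_ring_1) poly) \<in> KXD X \<Longrightarrow> pD p \<in> KXD X"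
proof -
  assume p: "p \<in> KXD X"
  have "{w. pD p w \<noteq> 0} \<subseteq> (\<lambda>u. [LD u]) ` {w. p w \<noteq> 0}"
    by (auto simp: pD_def unD_Some split: option.splits)
  moreover have "\<forall>w. pD p w \<noteq> 0 \<longrightarrow> w \<in> frakS X"
    using p by (auto simp: pD_def KXD_iff unD_Some frakS_LD split: option.splits)
  ultimately show ?thesis using p unfolding KXD_iff by (auto elim: finite_subset)
qed

lemmas KXD_closed = KXD_padd KXD_psmul KXD_psub KXD_pmono KXD_pmul KXD_pD KXD_pzero

lemma poly_induct_aux:
  assumes "finite S"
    and "P (pzero :: ('x,'k::comm_ring_1) poly)"
    and step: "\<And>k w q. w \<in> frakS X \<Longrightarrow> q \<in> KXD X \<Longrightarrow> P q \<Longrightarrow> P (padd (psmul k (pmono w)) q)"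
  shows "\<forall>p. p \<in> KXD X \<and> {w. p w \<noteq> (0::'k)} \<subseteq> S \<longrightarrow> P p"
  using assms(1)
proof (induction S rule: finite_induct)
  case empty
  then show ?case using assms(2) by (auto simp: pzero_def fun_eq_iff)
next
  case (insert a S)
  show ?case
  proof (intro allI impI)
    fix p :: "('x,'k) poly"
    assume h: "p \<in> KXD X \<and> {w. p w \<noteq> 0} \<subseteq> insert a S"
    define p' where "p' = p(a := 0)"
    have p'K: "p' \<in> KXD X" using h by (auto simp: p'_def KXD_iff elim: finite_subset[rotated])
    have "{w. p' w \<noteq> 0} \<subseteq> S" using h by (auto simp: p'_def)
    then have Pp': "P p'" using insert.IH p'K by blast
    show "P p"
    proof (cases "p a = 0")
      case True
      then have "p = p'" by (auto simp: p'_def)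
      then show ?thesis using Pp' by simp
    next
      case False
      then have "a \<in> frakS X" using h by (auto simp: KXD_iff)
      moreover have "p = padd (psmul (p a) (pmono a)) p'"
        by (auto simp: p'_def padd_def psmul_def pmono_def fun_eq_iff)
      ultimately show ?thesis using step[OF _ p'K Pp'] by metis
    qed
  qed
qed

lemma poly_induct[consumes 1, case_names zero step]:
  assumes "p \<in> KXD X"
    and "P pzero"
    and "\<And>k w q. w \<in> frakS X \<Longrightarrow> q \<in> KXD X \<Longrightarrow> P q \<Longrightarrow> P (padd (psmul k (pmono w)) q)"
  shows "P (p :: ('x,'k::comm_ring_1) poly)"
  using poly_induct_aux[of "{w. p w \<noteq> 0}" P X, OF _ assms(2,3)] assms(1)
  by (auto simp: KXD_iff)

lemma kspan_add: "p \<in> kspan S \<Longrightarrow> q \<in> kspan S \<Longrightarrow> padd p q \<in> kspan S"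
proof (induction p rule: kspan.induct)
  case kspan_zero
  then show ?case by simp
next
  case (kspan_step p r k)
  have "padd (padd (psmul k p) r) q = padd (psmul k p) (padd r q)"
    by (simp add: padd_def fun_eq_iff add.assoc)
  then show ?case using kspan_step by (auto intro: kspan.kspan_step)
qed

lemma kspan_smul: "p \<in> kspan S \<Longrightarrow> psmul c p \<in> kspan S"
proof (induction p rule: kspan.induct)
  case kspan_zero
  then show ?case by (simp add: kspan.kspan_zero)
next
  case (kspan_step p r k)
  have "psmul c (padd (psmul k p) r) = padd (psmul (c*k) p) (psmul c r)"
    by (simp add: padd_def psmul_def fun_eq_iff algebra_simps)
  then show ?case using kspan_step by (auto intro: kspan.kspan_step)
qed

lemma kspan_base: "p \<in> S \<Longrightarrow> p \<in> kspan S"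
proof -
  assume "p \<in> S"
  then have "padd (psmul 1 p) pzero \<in> kspan S" by (rule kspan.kspan_step) (rule kspan.kspan_zero)
  then show ?thesis by simp
qed

lemma kspan_sub: "p \<in> kspan S \<Longrightarrow> q \<in> kspan S \<Longrightarrow> psub p q \<in> kspan S"
  by (simp add: psub_as_padd kspan_add kspan_smul)

lemma kspan_subset: "p \<in> kspan S \<Longrightarrow> S \<subseteq> KXD X \<Longrightarrow> p \<in> KXD X"
  by (induction p rule: kspan.induct) (auto intro: KXD_closed)


lemma prodl_Cons: "xs \<noteq> [] \<Longrightarrow> prodl (a # xs) = pmul a (prodl xs)"
  by (cases xs) auto

lemma prodl_append: "xs \<noteq> [] \<Longrightarrow> ys \<noteq> [] \<Longrightarrow> prodl (xs @ ys) = pmul (prodl xs) (prodl ys)"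
proof (induction xs rule: prodl.induct)
  case 1 then show ?case by simp
next
  case (2 p) then show ?case by (simp add: prodl_Cons)
next
  case (3 p q ps) then show ?case by (simp add: pmul_assoc)
qed

lemma prodl_KXD: "xs \<noteq> [] \<Longrightarrow> set xs \<subseteq> KXD X \<Longrightarrow> prodl (xs :: ('x,'k::comm_ring_1) poly list) \<in> KXD X"
  by (induction xs rule: prodl.induct) (auto intro: KXD_pmul)

lemma prodl_mono: "w \<noteq> [] \<Longrightarrow> prodl (map (\<lambda>a. pmono [a]) w) = pmono w"
proof (induction w)
  case Nil then show ?case by simp
next
  case (Cons a w)
  then show ?case by (cases w) (auto simp: prodl_Cons)
qed

section \<open>Substitution\<close>

definition XS :: "'x set \<Rightarrow> 'x option set" where
  "XS X = insert None (Some ` X)"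

lemma subst_letter_KXD:
  assumes t: "t \<in> KXD X"
  shows "wfl (XS X) a \<Longrightarrow> subst_letter t a \<in> KXD X"
proof (induction a)
  case (Lx x)
  then show ?case using t by (cases x) (auto simp: XS_def intro!: KXD_pmono simp: frakS_single)
next
  case (LD w)
  then have "prodl (map (subst_letter t) w) \<in> KXD X"
    by (intro prodl_KXD) (auto simp: list_all_iff)
  then show ?case by (simp add: KXD_pD)
qed

lemma subst_word_KXD: "t \<in> KXD X \<Longrightarrow> u \<in> frakS (XS X) \<Longrightarrow> subst_word t u \<in> KXD X"
  unfolding subst_word_def frakS_def
  by (intro prodl_KXD) (auto simp: list_all_iff intro: subst_letter_KXD)

lemma subst_word_append: "u \<noteq> [] \<Longrightarrow> v \<noteq> [] \<Longrightarrow> subst_word t (u @ v) = pmul (subst_word t u) (subst_word t v)"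
  unfolding subst_word_def by (simp add: prodl_append)

lemma nstar_word_append: "nstar_word (u @ v) = nstar_word u + nstar_word v"
  by (simp add: nstar_word_def)

lemma emb_letter:
  shows "wfl X a \<Longrightarrow> wfl (XS X) (map_letter Some a) \<and> nstar (map_letter Some a) = 0
     \<and> subst_letter t (map_letter Some a) = pmono [a]"
proof (induction a)
  case (Lx x)
  then show ?case by (simp add: XS_def)
next
  case (LD w)
  then have w: "w \<noteq> []" "\<forall>a\<in>set w. wfl X a" by (auto simp: list_all_iff)
  then have IH: "\<forall>a\<in>set w. wfl (XS X) (map_letter Some a) \<and> nstar (map_letter Some a) = 0
     \<and> subst_letter t (map_letter Some a) = pmono [a]" using LD.IH by blast
  have e: "map (subst_letter t \<circ> map_letter Some) w = map (\<lambda>a. pmono [a]) w"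
    using IH by (auto intro: map_cong)
  have "subst_letter t (map_letter Some (LD w)) = pD (prodl (map (subst_letter t \<circ> map_letter Some) w))"
    by simp
  also have "\<dots> = pmono [LD w]" unfolding e prodl_mono[OF w(1)] by simp
  finally have "subst_letter t (map_letter Some (LD w)) = pmono [LD w]" .
  moreover have "sum_list (map (nstar \<circ> map_letter Some) w) = 0"
  proof -
    have "\<forall>a\<in>set w. nstar (map_letter Some a) = 0" using IH by blast
    then show ?thesis by (simp add: sum_list_eq_0_iff)
  qed
  ultimately show ?case using w IH by (simp add: list_all_iff)
qed

definition emb :: "'x letter list \<Rightarrow> 'x option letter list" where
  "emb w = map (map_letter Some) w"

lemma emb_word:
  assumes "w \<in> frakS X"
  shows "emb w \<in> frakS (XS X)" "nstar_word (emb w) = 0" "subst_word t (emb w) = pmono w"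
proof -
  have w: "w \<noteq> []" "\<forall>a\<in>set w. wfl X a" using assms by (auto simp: frakS_def list_all_iff)
  then show "emb w \<in> frakS (XS X)" using emb_letter by (auto simp: emb_def frakS_def list_all_iff)
  have "\<forall>a\<in>set w. nstar (map_letter Some a) = 0"
    using w emb_letter[where t = "pzero::('x, int) poly"] by blast
  then show "nstar_word (emb w) = 0" by (simp add: emb_def nstar_word_def sum_list_eq_0_iff)
  have "map (subst_letter t) (emb w) = map (\<lambda>a. pmono [a]) w"
    using w emb_letter by (auto simp: emb_def)
  then show "subst_word t (emb w) = pmono w" using w by (simp add: subst_word_def prodl_mono)
qed

section \<open>The generators of Id(T)\<close>

definition GT :: "'x set \<Rightarrow> ('x, 'k::comm_ring_1) poly set \<Rightarrow> ('x, 'k) poly set" where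
  "GT X T = {subst_word t u | u t. u \<in> frakS (XS X) \<and> nstar_word u = 1 \<and> t \<in> T}"

lemma IdT_GT: "IdT X T = kspan (GT X T)"
  by (simp add: IdT_def GT_def XS_def)

lemma GT_T: "t \<in> T \<Longrightarrow> t \<in> GT X T"
  unfolding GT_def
  by (rule CollectI, rule exI[of _ "[Lx None]"], rule exI[of _ t])
    (simp add: subst_word_def nstar_word_def frakS_def XS_def)

lemma GT_KXD: "T \<subseteq> KXD X \<Longrightarrow> g \<in> GT X T \<Longrightarrow> g \<in> KXD X"
  unfolding GT_def by (auto intro: subst_word_KXD)

lemma GT_D: "g \<in> GT X T \<Longrightarrow> pD g \<in> GT X T"
proof -
  assume "g \<in> GT X T"
  then obtain u t where g: "g = subst_word t u" "u \<in> frakS (XS X)" "nstar_word u = 1" "t \<in> T"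
    by (auto simp: GT_def)
  have "pD g = subst_word t [LD u]" using g by (simp add: subst_word_def)
  moreover have "[LD u] \<in> frakS (XS X)" using g by (simp add: frakS_def)
  moreover have "nstar_word [LD u] = 1" using g by (simp add: nstar_word_def)
  ultimately show ?thesis using g unfolding GT_def by blast
qed

lemma GT_lmul: "w \<in> frakS X \<Longrightarrow> g \<in> GT X T \<Longrightarrow> pmul (pmono w) g \<in> GT X T"
proof -
  assume w: "w \<in> frakS X" and "g \<in> GT X T"
  then obtain u t where g: "g = subst_word t u" "u \<in> frakS (XS X)" "nstar_word u = 1" "t \<in> T"
    by (auto simp: GT_def)
  have ne: "emb w \<noteq> []" "u \<noteq> []" using w g by (auto simp: emb_def frakS_def)
  have e: "subst_word t (emb w) = pmono w" by (rule emb_word(3)[OF w])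
  have "pmul (pmono w) g = subst_word t (emb w @ u)"
    using g ne by (simp add: subst_word_append e)
  moreover have "emb w @ u \<in> frakS (XS X)" using g emb_word[OF w] by (simp add: frakS_append)
  moreover have "nstar_word (emb w @ u) = 1" using g emb_word[OF w] by (simp add: nstar_word_append)
  ultimately show ?thesis using g unfolding GT_def by blast
qed

lemma GT_rmul: "w \<in> frakS X \<Longrightarrow> g \<in> GT X T \<Longrightarrow> pmul g (pmono w) \<in> GT X T"
proof -
  assume w: "w \<in> frakS X" and "g \<in> GT X T"
  then obtain u t where g: "g = subst_word t u" "u \<in> frakS (XS X)" "nstar_word u = 1" "t \<in> T"
    by (auto simp: GT_def)
  have ne: "emb w \<noteq> []" "u \<noteq> []" using w g by (auto simp: emb_def frakS_def)
  have e: "subst_word t (emb w) = pmono w" by (rule emb_word(3)[OF w])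
  have "pmul g (pmono w) = subst_word t (u @ emb w)"
    using g ne by (simp add: subst_word_append e)
  moreover have "u @ emb w \<in> frakS (XS X)" using g emb_word[OF w] by (simp add: frakS_append)
  moreover have "nstar_word (u @ emb w) = 1" using g emb_word[OF w] by (simp add: nstar_word_append)
  ultimately show ?thesis using g unfolding GT_def by blast
qed

lemma IdT_KXD: "T \<subseteq> KXD X \<Longrightarrow> p \<in> IdT X T \<Longrightarrow> p \<in> KXD X"
  unfolding IdT_GT using kspan_subset GT_KXD by blast

lemma IdT_zero: "pzero \<in> IdT X T"
  by (simp add: IdT_GT kspan.kspan_zero)
lemma IdT_add: "p \<in> IdT X T \<Longrightarrow> q \<in> IdT X T \<Longrightarrow> padd p q \<in> IdT X T"
  by (simp add: IdT_GT kspan_add)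
lemma IdT_smul: "p \<in> IdT X T \<Longrightarrow> psmul c p \<in> IdT X T"
  by (simp add: IdT_GT kspan_smul)
lemma IdT_sub: "p \<in> IdT X T \<Longrightarrow> q \<in> IdT X T \<Longrightarrow> psub p q \<in> IdT X T"
  by (simp add: IdT_GT kspan_sub)
lemma IdT_T: "t \<in> T \<Longrightarrow> t \<in> IdT X T"
  by (simp add: IdT_GT kspan_base GT_T)

lemma IdT_D: "p \<in> IdT X T \<Longrightarrow> pD p \<in> IdT X T"
  unfolding IdT_GT
proof (induction p rule: kspan.induct)
  case kspan_zero then show ?case by (simp add: kspan.kspan_zero)
next
  case (kspan_step p q k)
  then show ?case by (auto simp: pD_padd pD_psmul intro!: kspan.kspan_step GT_D)
qed

lemma GT_lmul_gen: "q \<in> KXD X \<Longrightarrow> g \<in> GT X T \<Longrightarrow> pmul q g \<in> kspan (GT X T)"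
proof (induction q rule: poly_induct)
  case zero then show ?case by (simp add: kspan.kspan_zero)
next
  case (step k w q)
  then show ?case
    by (auto simp: pmul_padd_left pmul_psmul_left intro!: kspan.kspan_step GT_lmul)
qed

lemma GT_rmul_gen: "q \<in> KXD X \<Longrightarrow> g \<in> GT X T \<Longrightarrow> pmul g q \<in> kspan (GT X T)"
proof (induction q rule: poly_induct)
  case zero then show ?case by (simp add: kspan.kspan_zero)
next
  case (step k w q)
  then show ?case
    by (auto simp: pmul_padd_right pmul_psmul_right intro!: kspan.kspan_step GT_rmul)
qed

lemma IdT_lmul: "p \<in> IdT X T \<Longrightarrow> q \<in> KXD X \<Longrightarrow> pmul q p \<in> IdT X T"
  unfolding IdT_GT
proof (induction p rule: kspan.induct)
  case kspan_zero then show ?case by (simp add: kspan.kspan_zero)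
next
  case (kspan_step p r k)
  then show ?case
    by (auto simp: pmul_padd_right pmul_psmul_right intro!: kspan_add kspan_smul GT_lmul_gen)
qed

lemma IdT_rmul: "p \<in> IdT X T \<Longrightarrow> q \<in> KXD X \<Longrightarrow> pmul p q \<in> IdT X T"
  unfolding IdT_GT
proof (induction p rule: kspan.induct)
  case kspan_zero then show ?case by (simp add: kspan.kspan_zero)
next
  case (kspan_step p r k)
  then show ?case
    by (auto simp: pmul_padd_left pmul_psmul_left intro!: kspan_add kspan_smul GT_rmul_gen)
qed

locale killctx =
  fixes F :: "('x,'k::comm_ring_1) poly \<Rightarrow> 'b" and m :: "'b \<Rightarrow> 'b \<Rightarrow> 'b" and d :: "'b \<Rightarrow> 'b"
    and z :: 'b and X :: "'x set" and t :: "('x,'k) poly"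
  assumes mulF: "\<And>a b. a \<in> KXD X \<Longrightarrow> b \<in> KXD X \<Longrightarrow> F (pmul a b) = m (F a) (F b)"
    and DF: "\<And>a. a \<in> KXD X \<Longrightarrow> F (pD a) = d (F a)"
    and mz1: "\<And>a. a \<in> KXD X \<Longrightarrow> m z (F a) = z"
    and mz2: "\<And>a. a \<in> KXD X \<Longrightarrow> m (F a) z = z"
    and dz: "d z = z"
    and tK: "t \<in> KXD X" and tz: "F t = z"
begin

lemma list_kill:
  assumes "\<forall>a\<in>set w. wfl (XS X) a \<and> nstar a \<noteq> 0 \<longrightarrow> F (subst_letter t a) = z"
    and "w \<noteq> []" "list_all (wfl (XS X)) w" "sum_list (map nstar w) \<noteq> 0"
  shows "F (prodl (map (subst_letter t) w)) = z"
  using assms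
proof (induction w)
  case Nil then show ?case by simp
next
  case (Cons a w)
  show ?case
  proof (cases "w = []")
    case True
    then show ?thesis using Cons.prems by simp
  next
    case False
    have aK: "subst_letter t a \<in> KXD X" using Cons.prems by (simp add: subst_letter_KXD[OF tK])
    have wK: "prodl (map (subst_letter t) w) \<in> KXD X"
      using Cons.prems False by (intro prodl_KXD) (auto simp: list_all_iff subst_letter_KXD[OF tK])
    have eq: "F (prodl (map (subst_letter t) (a # w))) = m (F (subst_letter t a)) (F (prodl (map (subst_letter t) w)))"
      using False aK wK by (simp add: prodl_Cons mulF)
    show ?thesis
    proof (cases "nstar a = 0")
      case True
      then have "F (prodl (map (subst_letter t) w)) = z"
        using Cons False by auto
      then show ?thesis using eq mz2[OF aK] by simp
    next
      case False
      then have "F (subst_letter t a) = z" using Cons.prems by auto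
      then show ?thesis using eq mz1[OF wK] by simp
    qed
  qed
qed

lemma letter_kill: "wfl (XS X) a \<Longrightarrow> nstar a \<noteq> 0 \<Longrightarrow> F (subst_letter t a) = z"
proof (induction a)
  case (Lx x)
  then show ?case using tz by (cases x) auto
next
  case (LD w)
  have "F (prodl (map (subst_letter t) w)) = z"
    using LD by (intro list_kill) auto
  moreover have "prodl (map (subst_letter t) w) \<in> KXD X"
    using LD.prems by (intro prodl_KXD) (auto simp: list_all_iff subst_letter_KXD[OF tK])
  ultimately show ?case by (simp add: DF dz)
qed

lemma word_kill: "u \<in> frakS (XS X) \<Longrightarrow> nstar_word u \<noteq> 0 \<Longrightarrow> F (subst_word t u) = z"
  unfolding subst_word_def nstar_word_def frakS_def
  by (rule list_kill) (auto intro: letter_kill)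

end

section \<open>Leibniz defect\<close>

definition Leib :: "'k::comm_ring_1 \<Rightarrow> ('x,'k) poly \<Rightarrow> ('x,'k) poly \<Rightarrow> ('x,'k) poly" where
  "Leib lam x y = psub (pD (pmul x y))
      (padd (padd (pmul (pD x) y) (pmul x (pD y))) (psmul lam (pmul (pD x) (pD y))))"

lemma Leib_add_left: "Leib lam (padd a b) c = padd (Leib lam a c) (Leib lam b c)"
  unfolding Leib_def
  by (simp add: pD_padd pmul_padd_left pmul_padd_right)
     (simp add: fun_eq_iff padd_def psub_def psmul_def algebra_simps)
lemma Leib_add_right: "Leib lam c (padd a b) = padd (Leib lam c a) (Leib lam c b)"
  unfolding Leib_def
  by (simp add: pD_padd pmul_padd_left pmul_padd_right)
     (simp add: fun_eq_iff padd_def psub_def psmul_def algebra_simps)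
lemma Leib_smul_left: "Leib lam (psmul k a) c = psmul k (Leib lam a c)"
  unfolding Leib_def
  by (simp add: pD_psmul pmul_psmul_left pmul_psmul_right)
     (simp add: fun_eq_iff padd_def psub_def psmul_def algebra_simps)
lemma Leib_smul_right: "Leib lam c (psmul k a) = psmul k (Leib lam c a)"
  unfolding Leib_def
  by (simp add: pD_psmul pmul_psmul_left pmul_psmul_right)
     (simp add: fun_eq_iff padd_def psub_def psmul_def algebra_simps)
lemma Leib_zero_left[simp]: "Leib lam pzero c = pzero"
  unfolding Leib_def by simp (simp add: fun_eq_iff padd_def psub_def psmul_def pzero_def)
lemma Leib_zero_right[simp]: "Leib lam c pzero = pzero"
  unfolding Leib_def by simp (simp add: fun_eq_iff padd_def psub_def psmul_def pzero_def)

definition tT :: "'k::comm_ring_1 \<Rightarrow> 'x letter list \<Rightarrow> 'x letter list \<Rightarrow> ('x,'k) poly" where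
  "tT mu x y = psub (padd (padd (pmul (pD (pmono x)) (pD (pmono y)))
                                  (psmul mu (pmul (pD (pmono x)) (pmono y))))
                            (psmul mu (pmul (pmono x) (pD (pmono y)))))
                      (psmul mu (pD (pmul (pmono x) (pmono y))))"

lemma ring_aux: "lam * mu = (1::'k::comm_ring_1) \<Longrightarrow>
   A + mu * B + mu * C - mu * E = (- mu) * (E - (B + C + lam * A))"
proof -
  assume h: "lam * mu = 1"
  have "(- mu) * (E - (B + C + lam * A)) = mu * B + mu * C - mu * E + (lam * mu) * A"
    by (simp add: algebra_simps)
  then show ?thesis using h by simp
qed

lemma tT_Leib: "lam * mu = 1 \<Longrightarrow> tT mu x y = psmul (- mu) (Leib lam (pmono x) (pmono y))"
  unfolding tT_def Leib_def
  by (simp add: fun_eq_iff padd_def psub_def psmul_def ring_aux del: pD_pmono pmul_mono)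

lemma Leib_tT: "lam * mu = 1 \<Longrightarrow> Leib lam (pmono x) (pmono y) = psmul (- lam) (tT mu x y)"
proof -
  assume h: "lam * mu = 1"
  have "psmul (- lam) (tT mu x y) = psmul (- lam) (psmul (- mu) (Leib lam (pmono x) (pmono y)))"
    by (simp add: tT_Leib[OF h])
  also have "\<dots> = psmul (lam * mu) (Leib lam (pmono x) (pmono y))"
    by (simp add: psmul_def fun_eq_iff mult.assoc)
  finally show ?thesis using h by simp
qed

lemma tT_Tset: "x \<in> frakS X \<Longrightarrow> y \<in> frakS X \<Longrightarrow> tT mu x y \<in> Tset X mu"
  unfolding Tset_def tT_def by blast

lemma Tset_KXD: "Tset X mu \<subseteq> KXD X"
  unfolding Tset_def by (auto intro!: KXD_closed) (auto simp: frakS_def)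

lemma Leib_IdT:
  assumes h: "lam * mu = 1" and p: "p \<in> KXD X" and q: "q \<in> KXD X"
  shows "Leib lam p q \<in> IdT X (Tset X mu)"
  using p
proof (induction p rule: poly_induct)
  case zero then show ?case by (simp add: IdT_zero)
next
  case (step k w p)
  have "Leib lam (pmono w) q \<in> IdT X (Tset X mu)"
    using q
  proof (induction q rule: poly_induct)
    case zero then show ?case by (simp add: IdT_zero)
  next
    case (step k' w' q)
    have "Leib lam (pmono w) (pmono w') \<in> IdT X (Tset X mu)"
      using step(1) \<open>w \<in> frakS X\<close> by (simp add: Leib_tT[OF h] IdT_smul IdT_T tT_Tset)
    then show ?case using step by (simp add: Leib_add_right Leib_smul_right IdT_add IdT_smul)
  qed
  then show ?case using step by (simp add: Leib_add_left Leib_smul_left IdT_add IdT_smul)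
qed


locale qctx =
  fixes X :: "'x set" and I :: "('x,'k::comm_ring_1) poly set" and lam :: 'k
  assumes I_sub: "\<And>p. p \<in> I \<Longrightarrow> p \<in> KXD X"
    and I_zero: "pzero \<in> I"
    and I_add: "\<And>p q. p \<in> I \<Longrightarrow> q \<in> I \<Longrightarrow> padd p q \<in> I"
    and I_smul: "\<And>p c. p \<in> I \<Longrightarrow> psmul c p \<in> I"
    and I_lmul: "\<And>p q. p \<in> I \<Longrightarrow> q \<in> KXD X \<Longrightarrow> pmul q p \<in> I"
    and I_rmul: "\<And>p q. p \<in> I \<Longrightarrow> q \<in> KXD X \<Longrightarrow> pmul p q \<in> I"
    and I_D: "\<And>p. p \<in> I \<Longrightarrow> pD p \<in> I"
    and I_Leib: "\<And>p q. p \<in> KXD X \<Longrightarrow> q \<in> KXD X \<Longrightarrow> Leib lam p q \<in> I"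
begin

abbreviation "V \<equiv> KXD X"
abbreviation "C \<equiv> cls X I"
abbreviation "Q \<equiv> quot X I"

lemma I_sub2: "p \<in> I \<Longrightarrow> q \<in> I \<Longrightarrow> psub p q \<in> I"
  by (simp add: psub_as_padd I_add I_smul)

lemma psub_self: "psub p p = (pzero :: ('x,'k) poly)"
  by (simp add: psub_def pzero_def fun_eq_iff)

lemma cls_mem: "p \<in> V \<Longrightarrow> p \<in> C p"
  by (simp add: cls_def psub_self I_zero)

lemma cls_eq: "p \<in> V \<Longrightarrow> q \<in> V \<Longrightarrow> C p = C q \<longleftrightarrow> psub p q \<in> I"
proof
  assume p: "p \<in> V" and q: "q \<in> V" and e: "C p = C q"
  then have "p \<in> C q" using cls_mem by blast
  then show "psub p q \<in> I" by (simp add: cls_def)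
next
  assume p: "p \<in> V" and q: "q \<in> V" and d: "psub p q \<in> I"
  have a: "psub r q = padd (psub r p) (psub p q)" for r
    by (simp add: psub_def padd_def fun_eq_iff)
  have b: "psub r p = psub (psub r q) (psub p q)" for r
    by (simp add: psub_def fun_eq_iff)
  show "C p = C q"
  proof (rule set_eqI)
    fix r
    show "r \<in> C p \<longleftrightarrow> r \<in> C q"
    proof
      assume "r \<in> C p"
      then have "r \<in> V" "psub r p \<in> I" by (auto simp: cls_def)
      then show "r \<in> C q" using a[of r] d I_add by (simp add: cls_def)
    next
      assume "r \<in> C q"
      then have "r \<in> V" "psub r q \<in> I" by (auto simp: cls_def)
      then show "r \<in> C p" using b[of r] d I_sub2 by (simp add: cls_def)
    qed
  qed
qed

lemma rep_cls: "p \<in> V \<Longrightarrow> rep (C p) \<in> V \<and> psub (rep (C p)) p \<in> I"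
proof -
  assume p: "p \<in> V"
  then have "rep (C p) \<in> C p" unfolding rep_def using cls_mem by (metis someI_ex)
  then show ?thesis by (simp add: cls_def)
qed

lemma Q_carrier: "carrier Q = C ` V"
  by (simp add: quot_def)

lemma Q_add: "p \<in> V \<Longrightarrow> q \<in> V \<Longrightarrow> add Q (C p) (C q) = C (padd p q)"
proof -
  assume p: "p \<in> V" and q: "q \<in> V"
  have "psub (padd (rep (C p)) (rep (C q))) (padd p q) = padd (psub (rep (C p)) p) (psub (rep (C q)) q)"
    by (simp add: psub_def padd_def fun_eq_iff)
  then show ?thesis using rep_cls[OF p] rep_cls[OF q] p q
    by (simp add: quot_def cls_eq KXD_padd I_add)
qed

lemma Q_smul: "p \<in> V \<Longrightarrow> smul Q k (C p) = C (psmul k p)"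
proof -
  assume p: "p \<in> V"
  have "psub (psmul k (rep (C p))) (psmul k p) = psmul k (psub (rep (C p)) p)"
    by (simp add: psub_def psmul_def fun_eq_iff algebra_simps)
  then show ?thesis using rep_cls[OF p] p
    by (simp add: quot_def cls_eq KXD_psmul I_smul)
qed

lemma Q_mult: "p \<in> V \<Longrightarrow> q \<in> V \<Longrightarrow> mult Q (C p) (C q) = C (pmul p q)"
proof -
  assume p: "p \<in> V" and q: "q \<in> V"
  let ?a = "rep (C p)" and ?b = "rep (C q)"
  have "psub (pmul ?a ?b) (pmul p q) = padd (pmul (psub ?a p) ?b) (pmul p (psub ?b q))"
    by (simp add: pmul_psub_left pmul_psub_right) (simp add: psub_def padd_def fun_eq_iff)
  moreover have "padd (pmul (psub ?a p) ?b) (pmul p (psub ?b q)) \<in> I"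
    using rep_cls[OF p] rep_cls[OF q] p q by (simp add: I_add I_lmul I_rmul)
  ultimately show ?thesis using rep_cls[OF p] rep_cls[OF q] p q
    by (simp add: quot_def cls_eq KXD_pmul)
qed

lemma Q_der: "p \<in> V \<Longrightarrow> der Q (C p) = C (pD p)"
proof -
  assume p: "p \<in> V"
  have "psub (pD (rep (C p))) (pD p) = pD (psub (rep (C p)) p)"
    by (simp add: pD_psub)
  then show ?thesis using rep_cls[OF p] p
    by (simp add: quot_def cls_eq KXD_pD I_D)
qed

lemma Q_zero: "zero Q = C pzero"
  by (simp add: quot_def)

lemmas Q_ops = Q_add Q_smul Q_mult Q_der Q_zero

lemma Q_cases: "a \<in> carrier Q \<Longrightarrow> (\<And>p. p \<in> V \<Longrightarrow> a = C p \<Longrightarrow> P) \<Longrightarrow> P"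
  by (auto simp: Q_carrier)

lemma C_in: "p \<in> V \<Longrightarrow> C p \<in> carrier Q"
  by (simp add: Q_carrier)

lemma padd_comm: "padd p q = padd q (p::('x,'k) poly)"
  by (simp add: padd_def fun_eq_iff add.commute)

lemma psmul_padd: "psmul k (padd p q) = padd (psmul k p) (psmul k (q::('x,'k) poly))"
  by (simp add: padd_def psmul_def fun_eq_iff algebra_simps)

lemma Q_kalgebra: "kalgebra Q"
  unfolding kalgebra_def
proof (intro conjI ballI allI)
  show "zero Q \<in> carrier Q" by (simp add: Q_zero C_in)
next
  fix a b assume "a \<in> carrier Q" "b \<in> carrier Q"
  then show "add Q a b \<in> carrier Q" "mult Q a b \<in> carrier Q" "add Q a b = add Q b a"
    by (auto elim!: Q_cases simp: Q_ops C_in KXD_closed padd_comm)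
next
  fix k a assume "a \<in> carrier Q"
  then show "smul Q k a \<in> carrier Q" by (auto elim!: Q_cases simp: Q_ops C_in KXD_closed)
next
  fix a b c assume "a \<in> carrier Q" "b \<in> carrier Q" "c \<in> carrier Q"
  then show "add Q (add Q a b) c = add Q a (add Q b c)"
    "mult Q (mult Q a b) c = mult Q a (mult Q b c)"
    "mult Q a (add Q b c) = add Q (mult Q a b) (mult Q a c)"
    "mult Q (add Q a b) c = add Q (mult Q a c) (mult Q b c)"
    by (auto elim!: Q_cases simp: Q_ops C_in KXD_closed pmul_assoc pmul_padd_left pmul_padd_right)
      (simp_all add: padd_def add.assoc)
next
  fix a assume "a \<in> carrier Q"
  then show "add Q (zero Q) a = a" "smul Q 1 a = a"
    by (auto elim!: Q_cases simp: Q_ops C_in KXD_closed)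
next
  fix a assume "a \<in> carrier Q"
  then show "\<exists>b\<in>carrier Q. add Q a b = zero Q"
  proof (rule Q_cases)
    fix p assume p: "p \<in> V" "a = C p"
    have "padd p (psmul (-1) p) = pzero" by (simp add: padd_def psmul_def pzero_def fun_eq_iff)
    then show ?thesis using p
      by (intro bexI[of _ "C (psmul (-1) p)"]) (simp_all add: Q_ops C_in KXD_closed)
  qed
next
  fix k a b assume "a \<in> carrier Q" "b \<in> carrier Q"
  then show "smul Q k (add Q a b) = add Q (smul Q k a) (smul Q k b)"
    "smul Q k (mult Q a b) = mult Q (smul Q k a) b"
    "smul Q k (mult Q a b) = mult Q a (smul Q k b)"
    by (auto elim!: Q_cases simp: Q_ops C_in KXD_closed pmul_psmul_left pmul_psmul_right psmul_padd)
next
  fix k l a assume "a \<in> carrier Q"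
  then show "smul Q (k + l) a = add Q (smul Q k a) (smul Q l a)"
    "smul Q (k * l) a = smul Q k (smul Q l a)"
    by (auto elim!: Q_cases simp: Q_ops C_in KXD_closed)
      (simp_all add: padd_def psmul_def algebra_simps fun_eq_iff)
qed

lemma Q_lda: "lambda_diff_alg lam Q"
  unfolding lambda_diff_alg_def
proof (intro conjI ballI allI Q_kalgebra)
  fix a assume "a \<in> carrier Q"
  then show "der Q a \<in> carrier Q" by (auto elim!: Q_cases simp: Q_ops C_in KXD_closed)
next
  fix a b assume "a \<in> carrier Q" "b \<in> carrier Q"
  then show "der Q (add Q a b) = add Q (der Q a) (der Q b)"
    by (auto elim!: Q_cases simp: Q_ops C_in KXD_closed pD_padd)
next
  fix k a assume "a \<in> carrier Q"
  then show "der Q (smul Q k a) = smul Q k (der Q a)"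
    by (auto elim!: Q_cases simp: Q_ops C_in KXD_closed pD_psmul)
next
  fix a b assume "a \<in> carrier Q" "b \<in> carrier Q"
  then show "der Q (mult Q a b) =
          add Q (add Q (mult Q (der Q a) b) (mult Q a (der Q b)))
                (smul Q lam (mult Q (der Q a) (der Q b)))"
  proof (elim Q_cases)
    fix p q assume p: "p \<in> V" "a = C p" and q: "q \<in> V" "b = C q"
    then show ?thesis
      using I_Leib[OF p(1) q(1)]
      by (simp add: Q_ops C_in KXD_closed cls_eq Leib_def)
  qed
qed

end


lemma qctx_IdT: "lam * mu = 1 \<Longrightarrow> qctx X (IdT X (Tset X mu)) lam"
  unfolding qctx_def
  using IdT_KXD[OF Tset_KXD]
  by (auto intro: IdT_zero IdT_add IdT_smul IdT_lmul IdT_rmul IdT_D Leib_IdT)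

lemma G_zero_c: "kalgebra R \<Longrightarrow> zero R \<in> carrier R"
  unfolding kalgebra_def by (elim conjE) (meson | metis)
lemma G_add_c: "kalgebra R \<Longrightarrow> a \<in> carrier R \<Longrightarrow> b \<in> carrier R \<Longrightarrow> add R a b \<in> carrier R"
  unfolding kalgebra_def by (elim conjE) (meson | metis)
lemma G_mult_c: "kalgebra R \<Longrightarrow> a \<in> carrier R \<Longrightarrow> b \<in> carrier R \<Longrightarrow> mult R a b \<in> carrier R"
  unfolding kalgebra_def by (elim conjE) (meson | metis)
lemma G_smul_c: "kalgebra R \<Longrightarrow> a \<in> carrier R \<Longrightarrow> smul R k a \<in> carrier R"
  unfolding kalgebra_def by (elim conjE) (meson | metis)
lemma G_der_c: "lambda_diff_alg lam R \<Longrightarrow> a \<in> carrier R \<Longrightarrow> der R a \<in> carrier R"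
  unfolding lambda_diff_alg_def by (elim conjE) (meson | metis)
lemma G_add_assoc: "kalgebra R \<Longrightarrow> a \<in> carrier R \<Longrightarrow> b \<in> carrier R \<Longrightarrow> c \<in> carrier R \<Longrightarrow> add R (add R a b) c = add R a (add R b c)"
  unfolding kalgebra_def by (elim conjE) (meson | metis)
lemma G_add_comm: "kalgebra R \<Longrightarrow> a \<in> carrier R \<Longrightarrow> b \<in> carrier R \<Longrightarrow> add R a b = add R b a"
  unfolding kalgebra_def by (elim conjE) (meson | metis)
lemma G_add_lzero: "kalgebra R \<Longrightarrow> a \<in> carrier R \<Longrightarrow> add R (zero R) a = a"
  unfolding kalgebra_def by (elim conjE) (meson | metis)
lemma G_add_neg: "kalgebra R \<Longrightarrow> a \<in> carrier R \<Longrightarrow> \<exists>b\<in>carrier R. add R a b = zero R"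
  unfolding kalgebra_def by (elim conjE) (meson | metis)
lemma G_smul_add: "kalgebra R \<Longrightarrow> a \<in> carrier R \<Longrightarrow> b \<in> carrier R \<Longrightarrow> smul R k (add R a b) = add R (smul R k a) (smul R k b)"
  unfolding kalgebra_def by (elim conjE) (meson | metis)
lemma G_add_smul: "kalgebra R \<Longrightarrow> a \<in> carrier R \<Longrightarrow> smul R (k + l) a = add R (smul R k a) (smul R l a)"
  unfolding kalgebra_def by (elim conjE) (meson | metis)
lemma G_smul_smul: "kalgebra R \<Longrightarrow> a \<in> carrier R \<Longrightarrow> smul R (k * l) a = smul R k (smul R l a)"
  unfolding kalgebra_def by (elim conjE) (meson | metis)
lemma G_smul_one: "kalgebra R \<Longrightarrow> a \<in> carrier R \<Longrightarrow> smul R 1 a = a"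
  unfolding kalgebra_def by (elim conjE) (meson | metis)
lemma G_mult_assoc: "kalgebra R \<Longrightarrow> a \<in> carrier R \<Longrightarrow> b \<in> carrier R \<Longrightarrow> c \<in> carrier R \<Longrightarrow> mult R (mult R a b) c = mult R a (mult R b c)"
  unfolding kalgebra_def by (elim conjE) (meson | metis)
lemma G_mult_add_right: "kalgebra R \<Longrightarrow> a \<in> carrier R \<Longrightarrow> b \<in> carrier R \<Longrightarrow> c \<in> carrier R \<Longrightarrow> mult R a (add R b c) = add R (mult R a b) (mult R a c)"
  unfolding kalgebra_def by (elim conjE) (meson | metis)
lemma G_mult_add_left: "kalgebra R \<Longrightarrow> a \<in> carrier R \<Longrightarrow> b \<in> carrier R \<Longrightarrow> c \<in> carrier R \<Longrightarrow> mult R (add R a b) c = add R (mult R a c) (mult R b c)"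
  unfolding kalgebra_def by (elim conjE) (meson | metis)
lemma G_smul_mult_left: "kalgebra R \<Longrightarrow> a \<in> carrier R \<Longrightarrow> b \<in> carrier R \<Longrightarrow> mult R (smul R k a) b = smul R k (mult R a b)"
  unfolding kalgebra_def by (elim conjE) (meson | metis)
lemma G_smul_mult_right: "kalgebra R \<Longrightarrow> a \<in> carrier R \<Longrightarrow> b \<in> carrier R \<Longrightarrow> mult R a (smul R k b) = smul R k (mult R a b)"
  unfolding kalgebra_def by (elim conjE) (meson | metis)
lemma G_der_add: "lambda_diff_alg lam R \<Longrightarrow> a \<in> carrier R \<Longrightarrow> b \<in> carrier R \<Longrightarrow> der R (add R a b) = add R (der R a) (der R b)"
  unfolding lambda_diff_alg_def by (elim conjE) (meson | metis)
lemma G_der_smul: "lambda_diff_alg lam R \<Longrightarrow> a \<in> carrier R \<Longrightarrow> der R (smul R k a) = smul R k (der R a)"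
  unfolding lambda_diff_alg_def by (elim conjE) (meson | metis)
lemma G_der_mult: "lambda_diff_alg lam R \<Longrightarrow> a \<in> carrier R \<Longrightarrow> b \<in> carrier R \<Longrightarrow> der R (mult R a b) =
          add R (add R (mult R (der R a) b) (mult R a (der R b)))
                (smul R lam (mult R (der R a) (der R b)))"
  unfolding lambda_diff_alg_def by (elim conjE) (meson | metis)

locale ldactx =
  fixes R :: "('k::comm_ring_1, 'r) kdalg" and lam :: 'k
  assumes lda: "lambda_diff_alg lam R"
begin

abbreviation "CR \<equiv> carrier R"

lemma kal: "kalgebra R" using lda unfolding lambda_diff_alg_def by (elim conjE) (meson | metis)

lemma zero_c[simp]: "zero R \<in> CR"
  using kal by (rule G_zero_c)
lemma add_c[simp]: "a \<in> CR \<Longrightarrow> b \<in> CR \<Longrightarrow> add R a b \<in> CR"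
  using kal by (rule G_add_c)
lemma mult_c[simp]: "a \<in> CR \<Longrightarrow> b \<in> CR \<Longrightarrow> mult R a b \<in> CR"
  using kal by (rule G_mult_c)
lemma smul_c[simp]: "a \<in> CR \<Longrightarrow> smul R k a \<in> CR"
  using kal by (rule G_smul_c)
lemma der_c[simp]: "a \<in> CR \<Longrightarrow> der R a \<in> CR"
  using lda by (rule G_der_c)
lemma add_assoc: "a \<in> CR \<Longrightarrow> b \<in> CR \<Longrightarrow> c \<in> CR \<Longrightarrow> add R (add R a b) c = add R a (add R b c)"
  using kal by (rule G_add_assoc)
lemma add_comm: "a \<in> CR \<Longrightarrow> b \<in> CR \<Longrightarrow> add R a b = add R b a"
  using kal by (rule G_add_comm)
lemma add_lzero[simp]: "a \<in> CR \<Longrightarrow> add R (zero R) a = a"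
  using kal by (rule G_add_lzero)
lemma add_rzero[simp]: "a \<in> CR \<Longrightarrow> add R a (zero R) = a"
  using add_comm add_lzero zero_c by metis
lemma add_neg: "a \<in> CR \<Longrightarrow> \<exists>b\<in>CR. add R a b = zero R"
  using kal by (rule G_add_neg)
lemma smul_add: "a \<in> CR \<Longrightarrow> b \<in> CR \<Longrightarrow> smul R k (add R a b) = add R (smul R k a) (smul R k b)"
  using kal by (rule G_smul_add)
lemma add_smul: "a \<in> CR \<Longrightarrow> smul R (k + l) a = add R (smul R k a) (smul R l a)"
  using kal by (rule G_add_smul)
lemma smul_smul: "a \<in> CR \<Longrightarrow> smul R (k * l) a = smul R k (smul R l a)"
  using kal by (rule G_smul_smul)
lemma smul_one[simp]: "a \<in> CR \<Longrightarrow> smul R 1 a = a"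
  using kal by (rule G_smul_one)
lemma mult_assoc: "a \<in> CR \<Longrightarrow> b \<in> CR \<Longrightarrow> c \<in> CR \<Longrightarrow> mult R (mult R a b) c = mult R a (mult R b c)"
  using kal by (rule G_mult_assoc)
lemma mult_add_right: "a \<in> CR \<Longrightarrow> b \<in> CR \<Longrightarrow> c \<in> CR \<Longrightarrow> mult R a (add R b c) = add R (mult R a b) (mult R a c)"
  using kal by (rule G_mult_add_right)
lemma mult_add_left: "a \<in> CR \<Longrightarrow> b \<in> CR \<Longrightarrow> c \<in> CR \<Longrightarrow> mult R (add R a b) c = add R (mult R a c) (mult R b c)"
  using kal by (rule G_mult_add_left)
lemma smul_mult_left: "a \<in> CR \<Longrightarrow> b \<in> CR \<Longrightarrow> mult R (smul R k a) b = smul R k (mult R a b)"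
  using kal by (rule G_smul_mult_left)
lemma smul_mult_right: "a \<in> CR \<Longrightarrow> b \<in> CR \<Longrightarrow> mult R a (smul R k b) = smul R k (mult R a b)"
  using kal by (rule G_smul_mult_right)
lemma der_add: "a \<in> CR \<Longrightarrow> b \<in> CR \<Longrightarrow> der R (add R a b) = add R (der R a) (der R b)"
  using lda by (rule G_der_add)
lemma der_smul: "a \<in> CR \<Longrightarrow> der R (smul R k a) = smul R k (der R a)"
  using lda by (rule G_der_smul)
lemma der_mult: "a \<in> CR \<Longrightarrow> b \<in> CR \<Longrightarrow> der R (mult R a b) =
          add R (add R (mult R (der R a) b) (mult R a (der R b)))
                (smul R lam (mult R (der R a) (der R b)))"
  using lda by (rule G_der_mult)

lemma idem_zero: "a \<in> CR \<Longrightarrow> add R a a = a \<Longrightarrow> a = zero R"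
proof -
  assume a: "a \<in> CR" and e: "add R a a = a"
  obtain b where b: "b \<in> CR" "add R a b = zero R" using add_neg[OF a] by blast
  have "add R (add R a a) b = add R a (add R a b)" using a b by (simp add: add_assoc)
  then show ?thesis using e b a by simp
qed

lemma smul_zero_k[simp]: "a \<in> CR \<Longrightarrow> smul R 0 a = zero R"
  using add_smul[of a 0 0] by (intro idem_zero) auto
lemma smul_zero_r[simp]: "smul R k (zero R) = zero R"
  using smul_add[of "zero R" "zero R" k] by (intro idem_zero) auto
lemma mult_zero_l[simp]: "a \<in> CR \<Longrightarrow> mult R (zero R) a = zero R"
  using mult_add_left[of "zero R" "zero R" a] by (intro idem_zero) auto
lemma mult_zero_r[simp]: "a \<in> CR \<Longrightarrow> mult R a (zero R) = zero R"
  using mult_add_right[of a "zero R" "zero R"] by (intro idem_zero) auto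
lemma der_zero[simp]: "der R (zero R) = zero R"
  using der_add[of "zero R" "zero R"] by (intro idem_zero) auto

lemma add_negself: "a \<in> CR \<Longrightarrow> add R a (smul R (-1) a) = zero R"
  using add_smul[of a 1 "-1"] by simp

lemma eq_from_diff: "a \<in> CR \<Longrightarrow> b \<in> CR \<Longrightarrow> add R a (smul R (-1) b) = zero R \<Longrightarrow> a = b"
proof -
  assume a: "a \<in> CR" and b: "b \<in> CR" and d: "add R a (smul R (-1) b) = zero R"
  have "add R (add R a (smul R (-1) b)) b = add R a (add R (smul R (-1) b) b)"
    using a b by (simp add: add_assoc)
  also have "add R (smul R (-1) b) b = zero R"
    using b add_negself add_comm by (metis smul_c)
  finally show ?thesis using d a b by simp
qed

lemma hom_zero:
  assumes "h (add A z z) = add R (h z) (h z)" "add A z z = z" "h z \<in> CR"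
  shows "h z = zero R"
  using assms idem_zero by metis

definition rsuml :: "'r list \<Rightarrow> 'r" where
  "rsuml xs = foldr (add R) xs (zero R)"

lemma rsuml_simps[simp]: "rsuml [] = zero R" "rsuml (a # xs) = add R a (rsuml xs)"
  by (simp_all add: rsuml_def)

lemma rsuml_c[simp]: "set xs \<subseteq> CR \<Longrightarrow> rsuml xs \<in> CR"
  by (induction xs) auto

lemma rsuml_append: "set xs \<subseteq> CR \<Longrightarrow> set ys \<subseteq> CR \<Longrightarrow> rsuml (xs @ ys) = add R (rsuml xs) (rsuml ys)"
  by (induction xs) (auto simp: add_assoc)

lemma rsuml_perm: "distinct xs \<Longrightarrow> distinct ys \<Longrightarrow> set xs = set ys \<Longrightarrow> G ` set xs \<subseteq> CR \<Longrightarrow> rsuml (map G xs) = rsuml (map G ys)"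
proof (induction xs arbitrary: ys)
  case Nil then show ?case by simp
next
  case (Cons a xs)
  have "a \<in> set ys" using Cons.prems by auto
  then obtain ys1 ys2 where ys: "ys = ys1 @ a # ys2" by (meson split_list)
  have m: "set xs = set (ys1 @ ys2)" using Cons.prems ys by auto
  have d: "distinct (ys1 @ ys2)" using Cons.prems ys by auto
  have c: "G ` set ys \<subseteq> CR" using Cons.prems by auto
  then have c1: "set (map G ys1) \<subseteq> CR" "set (map G ys2) \<subseteq> CR" "G a \<in> CR" using ys by auto
  have "rsuml (map G ys) = add R (rsuml (map G ys1)) (add R (G a) (rsuml (map G ys2)))"
    using ys c1 by (simp add: rsuml_append)
  also have "\<dots> = add R (G a) (add R (rsuml (map G ys1)) (rsuml (map G ys2)))"
    using c1 by (metis add_assoc add_comm rsuml_c)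
  also have "\<dots> = add R (G a) (rsuml (map G xs))"
  proof -
    have "G ` set xs \<subseteq> CR" using m c1 by auto
    then show ?thesis using Cons.IH[OF _ d m] Cons.prems c1 by (simp add: rsuml_append)
  qed
  finally show ?case by simp
qed

lemma rsuml_filter:
  assumes "\<forall>x\<in>set xs. \<not> P x \<longrightarrow> g x = zero R" "\<forall>x\<in>set xs. g x \<in> CR"
  shows "rsuml (map g (filter P xs)) = rsuml (map g xs)"
  using assms
proof (induction xs)
  case Nil then show ?case by simp
next
  case (Cons a xs)
  have c: "rsuml (map g xs) \<in> CR" using Cons.prems by (auto intro!: rsuml_c)
  show ?case
  proof (cases "P a")
    case True then show ?thesis using Cons by simp
  next
    case False then show ?thesis using Cons c by simp
  qed
qed

lemma rsuml_map_add:
  assumes "\<forall>x\<in>set xs. g x \<in> CR \<and> h x \<in> CR"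
  shows "rsuml (map (\<lambda>x. add R (g x) (h x)) xs) = add R (rsuml (map g xs)) (rsuml (map h xs))"
  using assms
proof (induction xs)
  case Nil then show ?case by simp
next
  case (Cons a xs)
  let ?G = "rsuml (map g xs)" and ?H = "rsuml (map h xs)"
  have c: "g a \<in> CR" "h a \<in> CR" "?G \<in> CR" "?H \<in> CR" using Cons.prems by (auto intro!: rsuml_c)
  have "add R (add R (g a) (h a)) (add R ?G ?H) = add R (add R (g a) ?G) (add R (h a) ?H)"
    using c by (metis add_assoc add_comm add_c)
  then show ?case using Cons by simp
qed

lemma rsuml_map_smul:
  assumes "\<forall>x\<in>set xs. g x \<in> CR"
  shows "rsuml (map (\<lambda>x. smul R k (g x)) xs) = smul R k (rsuml (map g xs))"
  using assms
proof (induction xs)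
  case Nil then show ?case by simp
next
  case (Cons a xs)
  have c: "rsuml (map g xs) \<in> CR" using Cons.prems by (auto intro!: rsuml_c)
  then show ?case using Cons by (simp add: smul_add)
qed

end


fun hl :: "('k, 'r, 'z) kdalg_scheme \<Rightarrow> ('x \<Rightarrow> 'r) \<Rightarrow> 'x letter \<Rightarrow> 'r"
and hw :: "('k, 'r, 'z) kdalg_scheme \<Rightarrow> ('x \<Rightarrow> 'r) \<Rightarrow> 'x letter list \<Rightarrow> 'r" where
  "hl R f (Lx x) = f x"
| "hl R f (LD w) = der R (hw R f w)"
| "hw R f [] = zero R"
| "hw R f [a] = hl R f a"
| "hw R f (a # b # r) = mult R (hl R f a) (hw R f (b # r))"

lemma KXD_Leib: "p \<in> KXD X \<Longrightarrow> q \<in> KXD X \<Longrightarrow> Leib lam p q \<in> KXD X"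
  unfolding Leib_def by (intro KXD_closed)

locale univctx = ldactx R lam for R :: "('k::comm_ring_1, 'r) kdalg" and lam +
  fixes f :: "'x \<Rightarrow> 'r" and X :: "'x set" and mu :: 'k
  assumes lm: "lam * mu = 1" and fX: "\<And>x. x \<in> X \<Longrightarrow> f x \<in> carrier R"
begin

lemma hw_c_aux: "\<forall>a\<in>set w. wfl X a \<longrightarrow> hl R f a \<in> CR \<Longrightarrow> list_all (wfl X) w \<Longrightarrow> hw R f w \<in> CR"
  by (induction w rule: induct_list012) auto

lemma hl_c: "wfl X a \<Longrightarrow> hl R f a \<in> CR"
proof (induction a)
  case (Lx x) then show ?case by (simp add: fX)
next
  case (LD w)
  then have "hw R f w \<in> CR" by (intro hw_c_aux) auto
  then show ?case by simp
qed

lemma hlw_c: "wfl X a \<Longrightarrow> hl R f a \<in> CR" "list_all (wfl X) w \<Longrightarrow> hw R f w \<in> CR"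
  using hl_c hw_c_aux by auto

lemma hw_c: "w \<in> frakS X \<Longrightarrow> hw R f w \<in> CR"
  by (simp add: frakS_def hlw_c)

lemma hw_Cons: "v \<noteq> [] \<Longrightarrow> hw R f (a # v) = mult R (hl R f a) (hw R f v)"
  by (cases v) auto

lemma hw_append: "u \<noteq> [] \<Longrightarrow> v \<noteq> [] \<Longrightarrow> list_all (wfl X) u \<Longrightarrow> list_all (wfl X) v \<Longrightarrow>
   hw R f (u @ v) = mult R (hw R f u) (hw R f v)"
proof (induction u)
  case Nil then show ?case by simp
next
  case (Cons a u)
  show ?case
  proof (cases "u = []")
    case True then show ?thesis using Cons by (simp add: hw_Cons)
  next
    case False
    have "hw R f ((a # u) @ v) = mult R (hl R f a) (mult R (hw R f u) (hw R f v))"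
      using Cons False by (simp add: hw_Cons)
    also have "\<dots> = mult R (mult R (hl R f a) (hw R f u)) (hw R f v)"
      using Cons.prems by (simp add: mult_assoc hlw_c)
    finally show ?thesis using False by (simp add: hw_Cons)
  qed
qed

definition hv :: "('x,'k) poly \<Rightarrow> 'r" where
  "hv p = rsuml (map (\<lambda>w. smul R (p w) (hw R f w)) (SOME ws. distinct ws \<and> set ws = {w. p w \<noteq> 0}))"

lemma hv_eq:
  assumes p: "p \<in> KXD X" and ws: "distinct ws" "{w. p w \<noteq> 0} \<subseteq> set ws" "set ws \<subseteq> frakS X"
  shows "hv p = rsuml (map (\<lambda>w. smul R (p w) (hw R f w)) ws)"
proof -
  let ?G = "\<lambda>w. smul R (p w) (hw R f w)"
  let ?S = "{w. p w \<noteq> 0}"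
  have fin: "finite ?S" using p by (simp add: KXD_iff)
  have ex: "\<exists>ws. distinct ws \<and> set ws = ?S" using finite_distinct_list[OF fin] by blast
  define E where "E = (SOME ws. distinct ws \<and> set ws = ?S)"
  have E: "distinct E" "set E = ?S" using someI_ex[OF ex] by (auto simp: E_def)
  have SfS: "?S \<subseteq> frakS X" using p by (auto simp: KXD_iff)
  have "rsuml (map ?G ws) = rsuml (map ?G (filter (\<lambda>w. w \<in> ?S) ws))"
    using ws by (intro rsuml_filter[symmetric]) (auto simp: hw_c)
  also have "\<dots> = rsuml (map ?G E)"
    using ws E SfS by (intro rsuml_perm) (auto simp: hw_c)
  finally show ?thesis by (simp add: hv_def E_def)
qed

lemma obtain_ws:
  assumes "finite S" "S \<subseteq> frakS X"
  shows "\<exists>ws. distinct ws \<and> set ws = S \<and> set ws \<subseteq> frakS X"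
  using finite_distinct_list[OF assms(1)] assms(2) by blast

lemma hv_c: "p \<in> KXD X \<Longrightarrow> hv p \<in> CR"
proof -
  assume p: "p \<in> KXD X"
  then obtain ws where ws: "distinct ws" "set ws = {w. p w \<noteq> 0}" "set ws \<subseteq> frakS X"
    using obtain_ws[of "{w. p w \<noteq> 0}"] by (auto simp: KXD_iff)
  have "\<forall>w\<in>set ws. smul R (p w) (hw R f w) \<in> CR" using ws by (auto intro!: smul_c hw_c)
  then show ?thesis using hv_eq[OF p ws(1) _ ws(3)] ws by (auto intro!: rsuml_c)
qed

lemma hv_add: "p \<in> KXD X \<Longrightarrow> q \<in> KXD X \<Longrightarrow> hv (padd p q) = add R (hv p) (hv q)"
proof -
  assume p: "p \<in> KXD X" and q: "q \<in> KXD X"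
  have fin: "finite ({w. p w \<noteq> 0} \<union> {w. q w \<noteq> 0})" using p q by (simp add: KXD_iff)
  have sub: "{w. p w \<noteq> 0} \<union> {w. q w \<noteq> 0} \<subseteq> frakS X" using p q by (auto simp: KXD_iff)
  obtain ws where ws: "distinct ws" "set ws = {w. p w \<noteq> 0} \<union> {w. q w \<noteq> 0}" "set ws \<subseteq> frakS X"
    using obtain_ws[OF fin sub] by blast
  have "hv (padd p q) = rsuml (map (\<lambda>w. smul R (p w + q w) (hw R f w)) ws)"
    using ws by (subst hv_eq[OF KXD_padd[OF p q] ws(1) _ ws(3)]) (auto simp: padd_def)
  also have "\<dots> = rsuml (map (\<lambda>w. add R (smul R (p w) (hw R f w)) (smul R (q w) (hw R f w))) ws)"
    using ws by (intro arg_cong[where f=rsuml] map_cong) (auto simp: add_smul hw_c)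
  also have "\<dots> = add R (hv p) (hv q)"
    using ws by (subst rsuml_map_add) (auto simp: hw_c hv_eq[OF p ws(1) _ ws(3)] hv_eq[OF q ws(1) _ ws(3)])
  finally show ?thesis .
qed

lemma hv_smul: "p \<in> KXD X \<Longrightarrow> hv (psmul k p) = smul R k (hv p)"
proof -
  assume p: "p \<in> KXD X"
  obtain ws where ws: "distinct ws" "set ws = {w. p w \<noteq> 0}" "set ws \<subseteq> frakS X"
    using obtain_ws[of "{w. p w \<noteq> 0}"] p by (auto simp: KXD_iff)
  have "hv (psmul k p) = rsuml (map (\<lambda>w. smul R (k * p w) (hw R f w)) ws)"
    using ws by (subst hv_eq[OF KXD_psmul[OF p] ws(1) _ ws(3)]) (auto simp: psmul_def)
  also have "\<dots> = rsuml (map (\<lambda>w. smul R k (smul R (p w) (hw R f w))) ws)"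
    using ws by (intro arg_cong[where f=rsuml] map_cong) (auto simp: smul_smul hw_c)
  also have "\<dots> = smul R k (hv p)"
    using ws by (subst rsuml_map_smul) (auto simp: hw_c hv_eq[OF p ws(1) _ ws(3)])
  finally show ?thesis .
qed

lemma hv_zero: "hv pzero = zero R"
proof -
  have "hv pzero = rsuml (map (\<lambda>w. smul R (pzero w) (hw R f w)) [])"
    apply (rule hv_eq) apply (rule KXD_pzero) by (auto simp: pzero_def)
  then show ?thesis by simp
qed

lemma hv_mono: "w \<in> frakS X \<Longrightarrow> hv (pmono w) = hw R f w"
proof -
  assume w: "w \<in> frakS X"
  have "hv (pmono w) = rsuml (map (\<lambda>v. smul R (pmono w v) (hw R f v)) [w])"
    apply (rule hv_eq) apply (rule KXD_pmono[OF w]) by (auto simp: pmono_def w)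
  then show ?thesis using w by (simp add: pmono_def hw_c)
qed

lemma hv_sub: "p \<in> KXD X \<Longrightarrow> q \<in> KXD X \<Longrightarrow> hv (psub p q) = add R (hv p) (smul R (-1) (hv q))"
  by (simp add: psub_as_padd hv_add hv_smul KXD_psmul)

lemma hv_mult_mono: "q \<in> KXD X \<Longrightarrow> w \<in> frakS X \<Longrightarrow> hv (pmul (pmono w) q) = mult R (hw R f w) (hv q)"
proof (induction q rule: poly_induct)
  case zero then show ?case by (simp add: hv_zero hw_c)
next
  case (step k w' q)
  have "hv (pmul (pmono w) (padd (psmul k (pmono w')) q)) = add R (smul R k (hw R f (w @ w'))) (hv (pmul (pmono w) q))"
    using step by (simp add: pmul_padd_right pmul_psmul_right hv_add hv_smul KXD_closed frakS_append hv_mono)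
  also have "\<dots> = add R (smul R k (mult R (hw R f w) (hw R f w'))) (mult R (hw R f w) (hv q))"
    using step by (simp add: hw_append frakS_def)
  also have "\<dots> = mult R (hw R f w) (hv (padd (psmul k (pmono w')) q))"
    using step by (simp add: hv_add hv_smul KXD_closed hv_mono mult_add_right smul_mult_right hw_c hv_c)
  finally show ?case .
qed

lemma hv_mult: "p \<in> KXD X \<Longrightarrow> q \<in> KXD X \<Longrightarrow> hv (pmul p q) = mult R (hv p) (hv q)"
proof (induction p rule: poly_induct)
  case zero then show ?case by (simp add: hv_zero hv_c)
next
  case (step k w p)
  have "hv (pmul (padd (psmul k (pmono w)) p) q) = add R (smul R k (hv (pmul (pmono w) q))) (hv (pmul p q))"
    using step by (simp add: pmul_padd_left pmul_psmul_left hv_add hv_smul KXD_closed)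
  also have "\<dots> = mult R (hv (padd (psmul k (pmono w)) p)) (hv q)"
    using step by (simp add: hv_mult_mono hv_add hv_smul KXD_closed hv_mono mult_add_left smul_mult_left hw_c hv_c)
  finally show ?case .
qed

lemma hv_D: "p \<in> KXD X \<Longrightarrow> hv (pD p) = der R (hv p)"
proof (induction p rule: poly_induct)
  case zero then show ?case by (simp add: hv_zero)
next
  case (step k w p)
  have wD: "[LD w] \<in> frakS X" using step by (simp add: frakS_LD)
  show ?case
    using step wD by (simp add: pD_padd pD_psmul hv_add hv_smul KXD_closed hv_mono der_add der_smul hw_c hv_c)
qed

lemma hv_Leib: "p \<in> KXD X \<Longrightarrow> q \<in> KXD X \<Longrightarrow> hv (Leib lam p q) = zero R"
  unfolding Leib_def
  by (simp add: hv_sub hv_add hv_smul hv_mult hv_D KXD_closed hv_c der_mult[symmetric] add_negself)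

lemma hv_T: "t \<in> Tset X mu \<Longrightarrow> hv t = zero R"
proof -
  assume "t \<in> Tset X mu"
  then obtain x y where xy: "x \<in> frakS X" "y \<in> frakS X" "t = tT mu x y"
    unfolding Tset_def tT_def by blast
  then show ?thesis by (simp add: tT_Leib[OF lm] hv_smul KXD_closed KXD_Leib hv_Leib)
qed

lemma hv_GT: "g \<in> GT X (Tset X mu) \<Longrightarrow> hv g = zero R"
proof -
  assume "g \<in> GT X (Tset X mu)"
  then obtain u t where g: "g = subst_word t u" "u \<in> frakS (XS X)" "nstar_word u = 1" "t \<in> Tset X mu"
    by (auto simp: GT_def)
  have tK: "t \<in> KXD X" using g Tset_KXD by blast
  interpret killctx hv "mult R" "der R" "zero R" X t
    by unfold_locales (auto simp: hv_mult hv_D hv_c tK hv_T g)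
  show ?thesis using word_kill g by simp
qed

lemma hv_IdT: "p \<in> IdT X (Tset X mu) \<Longrightarrow> hv p = zero R"
  unfolding IdT_GT
proof (induction p rule: kspan.induct)
  case kspan_zero then show ?case by (simp add: hv_zero)
next
  case (kspan_step p q k)
  have "p \<in> KXD X" "q \<in> KXD X"
    using kspan_step GT_KXD[OF Tset_KXD] kspan_subset[of q "GT X (Tset X mu)" X] by auto
  then show ?case using kspan_step by (simp add: hv_add hv_smul KXD_closed hv_GT)
qed

end


context qctx
begin

lemma dhom_zero:
  assumes h: "dhom Q R h" and k: "kalgebra R"
  shows "h (C pzero) = zero R"
proof -
  have z: "C pzero \<in> carrier Q" by (simp add: C_in)
  have "add Q (C pzero) (C pzero) = C pzero" by (simp add: Q_ops)
  then have e: "h (C pzero) = add R (h (C pzero)) (h (C pzero))"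
    using h z unfolding dhom_def by metis
  have c: "h (C pzero) \<in> carrier R" using h z unfolding dhom_def by blast
  obtain b where b: "b \<in> carrier R" "add R (h (C pzero)) b = zero R"
    using G_add_neg[OF k c] by blast
  have "add R (add R (h (C pzero)) (h (C pzero))) b = add R (h (C pzero)) (add R (h (C pzero)) b)"
    using k c b by (simp add: G_add_assoc)
  then show ?thesis using e b c k by (metis G_add_comm G_add_lzero G_zero_c)
qed

lemma dhom_unique:
  assumes h1: "dhom Q R h1" and h2: "dhom Q R h2" and k: "kalgebra R"
    and gen: "\<And>x. x \<in> X \<Longrightarrow> h1 (C (pmono [Lx x])) = h2 (C (pmono [Lx x]))"
  shows "a \<in> carrier Q \<Longrightarrow> h1 a = h2 a"
proof -
  have list_case: "\<And>w. \<forall>a\<in>set w. wfl X a \<longrightarrow> h1 (C (pmono [a])) = h2 (C (pmono [a])) \<Longrightarrow>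
      w \<noteq> [] \<Longrightarrow> list_all (wfl X) w \<Longrightarrow> h1 (C (pmono w)) = h2 (C (pmono w))"
  proof -
    fix w :: "'x letter list"
    show "\<forall>a\<in>set w. wfl X a \<longrightarrow> h1 (C (pmono [a])) = h2 (C (pmono [a])) \<Longrightarrow>
      w \<noteq> [] \<Longrightarrow> list_all (wfl X) w \<Longrightarrow> h1 (C (pmono w)) = h2 (C (pmono w))"
    proof (induction w rule: induct_list012)
      case 1 then show ?case by simp
    next
      case (2 a) then show ?case by simp
    next
      case (3 a b r)
      have fa: "[a] \<in> frakS X" and fr: "b # r \<in> frakS X" using "3.prems" by (auto simp: frakS_def)
      have "C (pmono (a # b # r)) = mult Q (C (pmono [a])) (C (pmono (b # r)))"
        using fa fr by (simp add: Q_ops KXD_pmono)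
      moreover have "h1 (C (pmono (b # r))) = h2 (C (pmono (b # r)))"
        using "3.IH"(2) "3.prems" by auto
      moreover have "h1 (C (pmono [a])) = h2 (C (pmono [a]))"
        using "3.prems" by auto
      ultimately show ?case using h1 h2 fa fr unfolding dhom_def
        by (metis C_in KXD_pmono)
    qed
  qed
  have letter_case: "wfl X a \<Longrightarrow> h1 (C (pmono [a])) = h2 (C (pmono [a]))" for a
  proof (induction a)
    case (Lx x) then show ?case using gen by simp
  next
    case (LD w)
    then have w: "w \<in> frakS X" by (simp add: frakS_def)
    have "h1 (C (pmono w)) = h2 (C (pmono w))"
      using LD w by (intro list_case) (auto simp: frakS_def)
    moreover have "C (pmono [LD w]) = der Q (C (pmono w))"
      using w by (simp add: Q_ops KXD_pmono)
    ultimately show ?case using h1 h2 w unfolding dhom_def by (metis C_in KXD_pmono)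
  qed
  have mono_case: "w \<in> frakS X \<Longrightarrow> h1 (C (pmono w)) = h2 (C (pmono w))" for w
    using list_case[of w] letter_case by (auto simp: frakS_def list_all_iff)
  have poly_case: "p \<in> KXD X \<Longrightarrow> h1 (C p) = h2 (C p)" for p
  proof (induction p rule: poly_induct)
    case zero then show ?case using dhom_zero[OF h1 k] dhom_zero[OF h2 k] by simp
  next
    case (step k' w q)
    have e: "C (padd (psmul k' (pmono w)) q) = add Q (smul Q k' (C (pmono w))) (C q)"
      using step by (simp add: Q_ops KXD_closed)
    have c: "C (pmono w) \<in> carrier Q" "C q \<in> carrier Q" "smul Q k' (C (pmono w)) \<in> carrier Q"
      using step by (auto simp: C_in KXD_closed Q_ops)
    show ?case using e c step mono_case[OF step(1)] h1 h2 unfolding dhom_def by metis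
  qed
  assume "a \<in> carrier Q"
  then show "h1 a = h2 a" by (auto simp: Q_carrier poly_case)
qed

end

lemma free_exist:
  assumes lm: "lam * mu = 1" and R: "lambda_diff_alg lam R" and f: "\<forall>x\<in>X. f x \<in> carrier R"
  shows "\<exists>h. dhom (KXDT X mu) R h \<and> (\<forall>x\<in>X. h (cls X (IdT X (Tset X mu)) (pmono [Lx x])) = f x)"
proof -
  interpret q: qctx X "IdT X (Tset X mu)" lam by (rule qctx_IdT[OF lm])
  interpret u: univctx R lam f X mu
    by unfold_locales (auto simp: R lm f)
  let ?h = "\<lambda>C. u.hv (rep C)"
  have hC: "p \<in> KXD X \<Longrightarrow> ?h (q.C p) = u.hv p" for p
  proof -
    assume p: "p \<in> KXD X"
    have r: "rep (q.C p) \<in> KXD X" "psub (rep (q.C p)) p \<in> IdT X (Tset X mu)" using q.rep_cls[OF p] by auto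
    then have "u.hv (psub (rep (q.C p)) p) = zero R" by (simp add: u.hv_IdT)
    then show ?thesis using r p by (simp add: u.hv_sub u.hv_c u.eq_from_diff)
  qed
  have "dhom q.Q R ?h"
    unfolding dhom_def
  proof (intro conjI ballI allI)
    fix a assume "a \<in> carrier q.Q"
    then show "?h a \<in> carrier R" "?h (der q.Q a) = der R (?h a)"
      by (auto elim!: q.Q_cases simp: hC q.Q_ops KXD_closed u.hv_c u.hv_D)
  next
    fix k a assume "a \<in> carrier q.Q"
    then show "?h (smul q.Q k a) = smul R k (?h a)"
      by (auto elim!: q.Q_cases simp: hC q.Q_ops KXD_closed u.hv_smul)
  next
    fix a b assume "a \<in> carrier q.Q" "b \<in> carrier q.Q"
    then show "?h (add q.Q a b) = add R (?h a) (?h b)" "?h (mult q.Q a b) = mult R (?h a) (?h b)"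
      by (auto elim!: q.Q_cases simp: hC q.Q_ops KXD_closed u.hv_add u.hv_mult)
  qed
  moreover have "\<forall>x\<in>X. ?h (q.C (pmono [Lx x])) = f x"
    by (auto simp: hC KXD_pmono frakS_def u.hv_mono)
  ultimately show ?thesis unfolding KXDT_def by blast
qed

lemma free_part:
  fixes X :: "'x set" and lam mu :: "'k::comm_ring_1"
  assumes lm: "lam * mu = 1"
  shows "free_lda TYPE('r) lam (KXDT X mu) X (\<lambda>x. cls X (IdT X (Tset X mu)) (pmono [Lx x]))"
proof -
  interpret q: qctx X "IdT X (Tset X mu)" lam by (rule qctx_IdT[OF lm])
  show ?thesis
    unfolding free_lda_def
  proof (intro conjI allI impI ballI)
    show "lambda_diff_alg lam (KXDT X mu)" unfolding KXDT_def by (rule q.Q_lda)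
  next
    fix x assume "x \<in> X"
    then show "q.C (pmono [Lx x]) \<in> carrier (KXDT X mu)"
      unfolding KXDT_def by (auto intro!: q.C_in KXD_pmono simp: frakS_def)
  next
    fix R :: "('k, 'r) kdalg" and f
    assume a: "lambda_diff_alg lam R \<and> (\<forall>x\<in>X. f x \<in> carrier R)"
    then show "\<exists>h. dhom (KXDT X mu) R h \<and> (\<forall>x\<in>X. h (q.C (pmono [Lx x])) = f x)"
      using free_exist[OF lm] by blast
  next
    fix R :: "('k, 'r) kdalg" and f h1 h2 a
    assume a: "lambda_diff_alg lam R \<and> (\<forall>x\<in>X. f x \<in> carrier R)"
      and hh: "dhom (KXDT X mu) R h1 \<and> dhom (KXDT X mu) R h2 \<and> (\<forall>x\<in>X. h1 (q.C (pmono [Lx x])) = f x) \<and>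
          (\<forall>x\<in>X. h2 (q.C (pmono [Lx x])) = f x)"
      and aa: "a \<in> carrier (KXDT X mu)"
    have k: "kalgebra R" using a by (simp add: lambda_diff_alg_def)
    show "h1 a = h2 a"
      using q.dhom_unique[OF _ _ k, of h1 h2 a] hh aa unfolding KXDT_def by metis
  qed
qed


section \<open>Good words\<close>

fun isD :: "'x letter \<Rightarrow> bool" where
  "isD (LD _) = True"
| "isD (Lx _) = False"

fun noDD :: "'x letter list \<Rightarrow> bool" where
  "noDD (a # b # r) = (\<not> (isD a \<and> isD b) \<and> noDD (b # r))"
| "noDD _ = True"

fun goodl :: "'x letter \<Rightarrow> bool" where
  "goodl (Lx x) = True"
| "goodl (LD w) = (list_all goodl w \<and> noDD w)"

definition goodw :: "'x letter list \<Rightarrow> bool" where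
  "goodw w = (list_all goodl w \<and> noDD w)"

definition goodS :: "'x set \<Rightarrow> 'x letter list set" where
  "goodS X = {w \<in> frakS X. goodw w}"

lemma noDD_Cons: "noDD (a # w) \<longleftrightarrow> noDD w \<and> (w \<noteq> [] \<longrightarrow> \<not> (isD a \<and> isD (hd w)))"
  by (cases w) auto

lemma noDD_append: "noDD (u @ v) \<longleftrightarrow> noDD u \<and> noDD v \<and> \<not> (u \<noteq> [] \<and> v \<noteq> [] \<and> isD (last u) \<and> isD (hd v))"
  by (induction u rule: induct_list012) (auto simp: noDD_Cons)

lemma goodw_append: "goodw (u @ v) \<longleftrightarrow> goodw u \<and> goodw v \<and> \<not> (u \<noteq> [] \<and> v \<noteq> [] \<and> isD (last u) \<and> isD (hd v))"
  by (auto simp: goodw_def noDD_append)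

lemma goodw_LD[simp]: "goodw [LD z] \<longleftrightarrow> goodw z"
  by (simp add: goodw_def)
lemma goodw_Lx[simp]: "goodw [Lx x]"
  by (simp add: goodw_def)
lemma goodw_Nil[simp]: "goodw []"
  by (simp add: goodw_def)
lemma goodw_Cons: "goodw (a # w) \<longleftrightarrow> goodl a \<and> goodw w \<and> (w \<noteq> [] \<longrightarrow> \<not> (isD a \<and> isD (hd w)))"
  by (auto simp: goodw_def noDD_Cons)

fun dcl :: "'x letter \<Rightarrow> nat" where
  "dcl (Lx x) = 0"
| "dcl (LD w) = Suc (sum_list (map dcl w))"

definition dc :: "'x letter list \<Rightarrow> nat" where
  "dc w = sum_list (map dcl w)"

lemma dc_append[simp]: "dc (u @ v) = dc u + dc v" by (simp add: dc_def)
lemma dc_Cons[simp]: "dc (a # v) = dcl a + dc v" by (simp add: dc_def)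
lemma dc_Nil[simp]: "dc [] = 0" by (simp add: dc_def)
lemma dc_LD[simp]: "dcl (LD w) = Suc (dc w)" by (simp add: dc_def)

fun lsz :: "'x letter \<Rightarrow> nat" where
  "lsz (Lx x) = 1"
| "lsz (LD w) = Suc (sum_list (map lsz w))"

inductive_set SPI :: "'x letter list set \<Rightarrow> 'x letter list set \<Rightarrow> 'x letter list set" for Y Z where
  SPI1: "y \<in> Y \<Longrightarrow> y \<in> SPI Y Z"
| SPI2: "y \<in> Y \<Longrightarrow> z \<in> Z \<Longrightarrow> y @ [LD z] \<in> SPI Y Z"
| SPI3: "y \<in> Y \<Longrightarrow> z \<in> Z \<Longrightarrow> s \<in> SPI Y Z \<Longrightarrow> y @ LD z # s \<in> SPI Y Z"

lemma catsetI: "a \<in> A \<Longrightarrow> b \<in> B \<Longrightarrow> a @ b \<in> catset A B"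
  by (auto simp: catset_def)
lemma DZI: "z \<in> Z \<Longrightarrow> [LD z] \<in> DZ Z"
  by (auto simp: DZ_def)

lemma catset_iff: "x \<in> catset A B \<longleftrightarrow> (\<exists>a b. x = a @ b \<and> a \<in> A \<and> b \<in> B)"
  by (auto simp: catset_def)
lemma DZ_iff: "x \<in> DZ Z \<longleftrightarrow> (\<exists>z. x = [LD z] \<and> z \<in> Z)"
  by (auto simp: DZ_def)

lemma setpow_YD: "s \<in> setpow (catset Y (DZ Z)) r \<Longrightarrow> s = [] \<or> s \<in> SPI Y Z"
proof (induction r arbitrary: s)
  case 0 then show ?case by simp
next
  case (Suc r)
  then obtain y z s' where s: "s = (y @ [LD z]) @ s'" "y \<in> Y" "z \<in> Z" "s' \<in> setpow (catset Y (DZ Z)) r"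
    by (auto simp: catset_iff DZ_iff)
  then show ?case using Suc.IH[OF s(4)] by (auto intro: SPI.intros)
qed

lemma setpow_YD_Suc: "s \<in> setpow (catset Y (DZ Z)) (Suc r) \<Longrightarrow> s \<in> SPI Y Z"
proof -
  assume "s \<in> setpow (catset Y (DZ Z)) (Suc r)"
  then obtain y z s' where s: "s = (y @ [LD z]) @ s'" "y \<in> Y" "z \<in> Z" "s' \<in> setpow (catset Y (DZ Z)) r"
    by (auto simp: catset_iff DZ_iff)
  then show ?thesis using setpow_YD[OF s(4)] by (auto intro: SPI.intros)
qed

lemma setpow_YD_Y: "s \<in> setpow (catset Y (DZ Z)) r \<Longrightarrow> y \<in> Y \<Longrightarrow> s @ y \<in> SPI Y Z"
proof (induction r arbitrary: s)
  case 0 then show ?case by (auto intro: SPI.intros)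
next
  case (Suc r)
  then obtain y' z s' where s: "s = (y' @ [LD z]) @ s'" "y' \<in> Y" "z \<in> Z" "s' \<in> setpow (catset Y (DZ Z)) r"
    by (auto simp: catset_iff DZ_iff)
  then show ?case using Suc.IH[OF s(4) Suc.prems(2)] by (auto intro: SPI.intros)
qed

lemma setpow_DY_C: "s \<in> setpow (catset (DZ Z) Y) r \<Longrightarrow> y \<in> Y \<Longrightarrow> y @ s \<in> SPI Y Z"
proof (induction r arbitrary: s y)
  case 0 then show ?case by (auto intro: SPI.intros)
next
  case (Suc r)
  then obtain y' z s' where s: "s = ([LD z] @ y') @ s'" "y' \<in> Y" "z \<in> Z" "s' \<in> setpow (catset (DZ Z) Y) r"
    by (auto simp: catset_iff DZ_iff)
  then show ?case using Suc.IH[OF s(4) s(2)] Suc.prems(2) SPI3[of y Y z Z "y' @ s'"] by simp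
qed

lemma setpow_DY_D: "s \<in> setpow (catset (DZ Z) Y) r \<Longrightarrow> y \<in> Y \<Longrightarrow> z \<in> Z \<Longrightarrow> y @ s @ [LD z] \<in> SPI Y Z"
proof (induction r arbitrary: s y)
  case 0 then show ?case by (auto intro: SPI.intros)
next
  case (Suc r)
  then obtain y' z' s' where s: "s = ([LD z'] @ y') @ s'" "y' \<in> Y" "z' \<in> Z" "s' \<in> setpow (catset (DZ Z) Y) r"
    by (auto simp: catset_iff DZ_iff)
  then show ?case using Suc.IH[OF s(4) s(2) Suc.prems(3)] Suc.prems(2) SPI3[of y Y z' Z "y' @ s' @ [LD z]"] by simp
qed

lemma setpow_snoc: "t \<in> setpow A r \<Longrightarrow> a \<in> A \<Longrightarrow> t @ a \<in> setpow A (Suc r)"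
proof (induction r arbitrary: t)
  case 0 then show ?case by (auto simp: catset_iff)
next
  case (Suc r)
  then obtain b t' where t: "t = b @ t'" "b \<in> A" "t' \<in> setpow A r" by (auto simp: catset_iff)
  then show ?case using Suc.IH[OF t(3) Suc.prems(2)] by (auto simp: catset_iff)
qed

lemma G1: "s \<in> setpow (catset Y (DZ Z)) r \<Longrightarrow> z \<in> Z \<Longrightarrow>
    \<exists>t z'. [LD z] @ s = t @ [LD z'] \<and> t \<in> setpow (catset (DZ Z) Y) r \<and> z' \<in> Z"
proof (induction r arbitrary: s z)
  case 0 then show ?case by auto
next
  case (Suc r)
  then obtain y z1 s' where s: "s = (y @ [LD z1]) @ s'" "y \<in> Y" "z1 \<in> Z" "s' \<in> setpow (catset Y (DZ Z)) r"
    by (auto simp: catset_iff DZ_iff)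
  obtain t' z' where t': "[LD z1] @ s' = t' @ [LD z']" "t' \<in> setpow (catset (DZ Z) Y) r" "z' \<in> Z"
    using Suc.IH[OF s(4) s(3)] by blast
  have "[LD z] @ s = (([LD z] @ y) @ t') @ [LD z']" using s t' by simp
  moreover have "([LD z] @ y) @ t' \<in> setpow (catset (DZ Z) Y) (Suc r)"
    using t' s Suc.prems(2) by (simp only: setpow.simps) (intro catsetI DZI)
  ultimately show ?case using t' by blast
qed

lemma LambdaD_eq: "LambdaD Y Z = SPI Y Z \<union> DZ Z \<union> catset (DZ Z) (SPI Y Z)"
proof
  show "LambdaD Y Z \<subseteq> SPI Y Z \<union> DZ Z \<union> catset (DZ Z) (SPI Y Z)"
  proof
    fix s assume "s \<in> LambdaD Y Z"
    then consider (a) r where "r \<ge> 1" "s \<in> setpow (catset Y (DZ Z)) r"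
      | (b) r where "s \<in> catset (setpow (catset Y (DZ Z)) r) Y"
      | (c) r where "r \<ge> 1" "s \<in> setpow (catset (DZ Z) Y) r"
      | (d) r where "s \<in> catset (setpow (catset (DZ Z) Y) r) (DZ Z)"
      unfolding LambdaD_def by blast
    then show "s \<in> SPI Y Z \<union> DZ Z \<union> catset (DZ Z) (SPI Y Z)"
    proof cases
      case (a r)
      then obtain n where "r = Suc n" by (cases r) auto
      then show ?thesis using a setpow_YD_Suc by blast
    next
      case (b r)
      then obtain t y where "s = t @ y" "t \<in> setpow (catset Y (DZ Z)) r" "y \<in> Y" by (auto simp: catset_iff)
      then show ?thesis using setpow_YD_Y by blast
    next
      case (c r)
      then obtain n where n: "r = Suc n" by (cases r) auto
      then obtain z y s' where s: "s = ([LD z] @ y) @ s'" "y \<in> Y" "z \<in> Z" "s' \<in> setpow (catset (DZ Z) Y) n"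
        using c by (auto simp: catset_iff DZ_iff)
      then have "y @ s' \<in> SPI Y Z" using setpow_DY_C by blast
      then have "[LD z] @ (y @ s') \<in> catset (DZ Z) (SPI Y Z)" using s by (intro catsetI DZI)
      then show ?thesis using s by simp
    next
      case (d r)
      then obtain t z where s: "s = t @ [LD z]" "t \<in> setpow (catset (DZ Z) Y) r" "z \<in> Z"
        by (auto simp: catset_iff DZ_iff)
      show ?thesis
      proof (cases r)
        case 0 then show ?thesis using s by (auto simp: DZ_iff)
      next
        case (Suc n)
        then obtain z' y s' where t: "t = ([LD z'] @ y) @ s'" "y \<in> Y" "z' \<in> Z" "s' \<in> setpow (catset (DZ Z) Y) n"
          using s by (auto simp: catset_iff DZ_iff)
        then have "y @ s' @ [LD z] \<in> SPI Y Z" using setpow_DY_D s by blast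
        then have "[LD z'] @ (y @ s' @ [LD z]) \<in> catset (DZ Z) (SPI Y Z)" using t by (intro catsetI DZI)
        then show ?thesis using s t by simp
      qed
    qed
  qed
next
  have spi: "s \<in> SPI Y Z \<Longrightarrow> (\<exists>r\<ge>1. s \<in> setpow (catset Y (DZ Z)) r) \<or> (\<exists>r. s \<in> catset (setpow (catset Y (DZ Z)) r) Y)" for s
  proof (induction s rule: SPI.induct)
    case (SPI1 y) then show ?case by (intro disjI2 exI[of _ 0]) (auto simp: catset_iff)
  next
    case (SPI2 y z) then show ?case by (intro disjI1 exI[of _ 1]) (auto simp: catset_iff DZ_iff)
  next
    case (SPI3 y z s)
    then show ?case
    proof (elim disjE exE conjE)
      fix r assume "r \<ge> 1" "s \<in> setpow (catset Y (DZ Z)) r"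
      then have "(y @ [LD z]) @ s \<in> setpow (catset Y (DZ Z)) (Suc r)"
        using SPI3 by (simp only: setpow.simps) (intro catsetI DZI)
      then show ?thesis by (intro disjI1 exI[of _ "Suc r"]) simp
    next
      fix r assume "s \<in> catset (setpow (catset Y (DZ Z)) r) Y"
      then obtain t y' where "s = t @ y'" "t \<in> setpow (catset Y (DZ Z)) r" "y' \<in> Y" by (auto simp: catset_iff)
      then have "y @ LD z # s = ((y @ [LD z]) @ t) @ y'" "(y @ [LD z]) @ t \<in> setpow (catset Y (DZ Z)) (Suc r)"
        using SPI3 by (simp, simp only: setpow.simps, intro catsetI DZI)
      then have "y @ LD z # s \<in> catset (setpow (catset Y (DZ Z)) (Suc r)) Y"
        using \<open>y' \<in> Y\<close> by (simp only:) (intro catsetI)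
      then show ?thesis by blast
    qed
  qed
  show "SPI Y Z \<union> DZ Z \<union> catset (DZ Z) (SPI Y Z) \<subseteq> LambdaD Y Z"
  proof
    fix s assume "s \<in> SPI Y Z \<union> DZ Z \<union> catset (DZ Z) (SPI Y Z)"
    then consider (a) "s \<in> SPI Y Z" | (b) "s \<in> DZ Z" | (c) z s' where "s = [LD z] @ s'" "z \<in> Z" "s' \<in> SPI Y Z"
      by (auto simp: catset_iff DZ_iff)
    then show "s \<in> LambdaD Y Z"
    proof cases
      case a then show ?thesis using spi[of s] unfolding LambdaD_def by auto
    next
      case b
      then have "s \<in> catset (setpow (catset (DZ Z) Y) 0) (DZ Z)" by (auto simp: catset_iff)
      then show ?thesis unfolding LambdaD_def by blast
    next
      case c
      from spi[OF c(3)] show ?thesis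
      proof (elim disjE exE conjE)
        fix r assume r: "r \<ge> 1" "s' \<in> setpow (catset Y (DZ Z)) r"
        obtain t z' where "[LD z] @ s' = t @ [LD z']" "t \<in> setpow (catset (DZ Z) Y) r" "z' \<in> Z"
          using G1[OF r(2) c(2)] by blast
        then have "s \<in> catset (setpow (catset (DZ Z) Y) r) (DZ Z)" using c by (auto simp: catset_iff DZ_iff)
        then show ?thesis unfolding LambdaD_def by blast
      next
        fix r assume "s' \<in> catset (setpow (catset Y (DZ Z)) r) Y"
        then obtain t y where ty: "s' = t @ y" "t \<in> setpow (catset Y (DZ Z)) r" "y \<in> Y" by (auto simp: catset_iff)
        obtain t' z' where t': "[LD z] @ t = t' @ [LD z']" "t' \<in> setpow (catset (DZ Z) Y) r" "z' \<in> Z"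
          using G1[OF ty(2) c(2)] by blast
        have "s = t' @ ([LD z'] @ y)" using c ty t' by simp
        moreover have "[LD z'] @ y \<in> catset (DZ Z) Y" using t' ty by (intro catsetI DZI)
        ultimately have "s \<in> setpow (catset (DZ Z) Y) (Suc r)" using setpow_snoc t' by blast
        then have "\<exists>r'\<in>{1..}. s \<in> setpow (catset (DZ Z) Y) r'" by (intro bexI[of _ "Suc r"]) auto
        then show ?thesis unfolding LambdaD_def by blast
      qed
    qed
  qed
qed


lemma Sg_good: "y \<in> Sg X \<Longrightarrow> y \<in> goodS X \<and> y \<noteq> [] \<and> \<not> isD (hd y) \<and> \<not> isD (last y)"
proof -
  assume y: "y \<in> Sg X"
  then have ne: "y \<noteq> []" and s: "set y \<subseteq> Lx ` X" by (auto simp: Sg_def)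
  have nd: "\<forall>a\<in>set y. \<not> isD a" using s by auto
  have "noDD y" using nd by (induction y rule: induct_list012) auto
  moreover have "list_all goodl y" using s by (auto simp: list_all_iff)
  moreover have "list_all (wfl X) y" using s by (auto simp: list_all_iff)
  ultimately show ?thesis using ne nd by (auto simp: goodS_def goodw_def frakS_def)
qed

lemma goodS_LD: "z \<in> goodS X \<Longrightarrow> [LD z] \<in> goodS X"
  by (auto simp: goodS_def frakS_def goodw_def)

lemma goodS_append: "u \<in> goodS X \<Longrightarrow> v \<in> goodS X \<Longrightarrow> \<not> (isD (last u) \<and> isD (hd v)) \<Longrightarrow> u @ v \<in> goodS X"
  by (auto simp: goodS_def goodw_append frakS_append)

lemma goodS_ne: "u \<in> goodS X \<Longrightarrow> u \<noteq> []"
  by (auto simp: goodS_def frakS_def)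

lemma SPI_good: "s \<in> SPI (Sg X) Z \<Longrightarrow> Z \<subseteq> goodS X \<Longrightarrow> s \<in> goodS X \<and> \<not> isD (hd s)"
proof (induction s rule: SPI.induct)
  case (SPI1 y) then show ?case using Sg_good by blast
next
  case (SPI2 y z)
  then show ?case using Sg_good[OF SPI2(1)] goodS_LD[of z X]
    by (auto intro!: goodS_append)
next
  case (SPI3 y z s)
  have "y @ [LD z] \<in> goodS X" using SPI3 Sg_good[OF SPI3(1)] goodS_LD[of z X]
    by (auto intro!: goodS_append)
  then have "(y @ [LD z]) @ s \<in> goodS X" using SPI3 by (intro goodS_append[of "y @ [LD z]"]) auto
  then show ?case using Sg_good[OF SPI3(1)] by simp
qed

lemma LambdaD_good: "Z \<subseteq> goodS X \<Longrightarrow> LambdaD (Sg X) Z \<subseteq> goodS X"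
proof
  fix s assume Z: "Z \<subseteq> goodS X" and "s \<in> LambdaD (Sg X) Z"
  then consider (a) "s \<in> SPI (Sg X) Z" | (b) z where "s = [LD z]" "z \<in> Z"
    | (c) z s' where "s = [LD z] @ s'" "z \<in> Z" "s' \<in> SPI (Sg X) Z"
    unfolding LambdaD_eq by (auto simp: catset_iff DZ_iff)
  then show "s \<in> goodS X"
  proof cases
    case a then show ?thesis using SPI_good Z by blast
  next
    case b then show ?thesis using Z goodS_LD by blast
  next
    case c
    have "[LD z] @ s' \<in> goodS X" using c Z goodS_LD SPI_good[OF c(3) Z] by (intro goodS_append) auto
    then show ?thesis using c by simp
  qed
qed

lemma PhiN_good: "PhiN X n \<subseteq> goodS X"
proof (induction n)
  case 0 then show ?case using Sg_good by auto
next
  case (Suc n) then show ?case by (simp add: LambdaD_good)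
qed

lemma SPI_mono: "s \<in> SPI Y Z \<Longrightarrow> Z \<subseteq> Z' \<Longrightarrow> s \<in> SPI Y Z'"
  by (induction s rule: SPI.induct) (auto intro: SPI.intros)

lemma DZ_mono: "Z \<subseteq> Z' \<Longrightarrow> DZ Z \<subseteq> DZ Z'"
  by (auto simp: DZ_def)
lemma catset_mono: "A \<subseteq> A' \<Longrightarrow> B \<subseteq> B' \<Longrightarrow> catset A B \<subseteq> catset A' B'"
  by (auto simp: catset_def)
lemma SPI_mono': "Z \<subseteq> Z' \<Longrightarrow> SPI Y Z \<subseteq> SPI Y Z'"
  using SPI_mono by blast

lemma LambdaD_mono: "Z \<subseteq> Z' \<Longrightarrow> LambdaD Y Z \<subseteq> LambdaD Y Z'"
  unfolding LambdaD_eq by (intro Un_mono catset_mono DZ_mono SPI_mono')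

lemma PhiN_Suc_mono: "PhiN X n \<subseteq> PhiN X (Suc n)"
proof (induction n)
  case 0 then show ?case by (auto simp: LambdaD_eq intro: SPI1)
next
  case (Suc n) then show ?case by (simp add: LambdaD_mono)
qed

lemma PhiN_mono: "m \<le> n \<Longrightarrow> PhiN X m \<subseteq> PhiN X n"
  by (rule lift_Suc_mono_le[of "PhiN X"]) (rule PhiN_Suc_mono)

lemma SPI_intro:
  "noDD w \<Longrightarrow> w \<noteq> [] \<Longrightarrow> \<not> isD (hd w) \<Longrightarrow> (\<forall>a\<in>set w. (\<exists>x\<in>X. a = Lx x) \<or> (\<exists>z\<in>Z. a = LD z))
    \<Longrightarrow> w \<in> SPI (Sg X) Z"
proof (induction "length w" arbitrary: w rule: less_induct)
  case less
  define y where "y = takeWhile (\<lambda>a. \<not> isD a) w"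
  define rest where "rest = dropWhile (\<lambda>a. \<not> isD a) w"
  have w: "w = y @ rest" by (simp add: y_def rest_def)
  have yne: "y \<noteq> []" using less.prems(2,3) by (cases w) (auto simp: y_def)
  have ySg: "y \<in> Sg X"
  proof -
    have "\<forall>a\<in>set y. \<not> isD a \<and> a \<in> set w" by (auto simp: y_def dest: set_takeWhileD)
    then have "set y \<subseteq> Lx ` X" using less.prems(4) by fastforce
    then show ?thesis using yne by (simp add: Sg_def)
  qed
  show ?case
  proof (cases rest)
    case Nil then show ?thesis using w ySg by (auto intro: SPI1)
  next
    case (Cons a rest')
    have "isD a" using Cons hd_dropWhile[of "\<lambda>a. \<not> isD a" w] by (simp add: rest_def)
    then obtain z where a: "a = LD z" by (cases a) auto
    have zZ: "z \<in> Z" using less.prems(4) w Cons a by auto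
    show ?thesis
    proof (cases "rest' = []")
      case True then show ?thesis using w Cons a ySg zZ by (auto intro: SPI2)
    next
      case False
      have nd: "noDD (LD z # rest')" using less.prems(1) w Cons a by (simp add: noDD_append)
      then have "noDD rest'" "\<not> isD (hd rest')" using False by (auto simp: noDD_Cons)
      moreover have "length rest' < length w" using w Cons by simp
      moreover have "\<forall>a\<in>set rest'. (\<exists>x\<in>X. a = Lx x) \<or> (\<exists>z\<in>Z. a = LD z)"
        using less.prems(4) w Cons by auto
      ultimately have "rest' \<in> SPI (Sg X) Z" using less.hyps False by blast
      then show ?thesis using w Cons a ySg zZ by (auto intro: SPI3)
    qed
  qed
qed

lemma good_letters: "w \<in> goodS X \<Longrightarrow> a \<in> set w \<Longrightarrow> (\<exists>x\<in>X. a = Lx x) \<or> (\<exists>z. a = LD z \<and> z \<in> goodS X)"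
  by (cases a) (auto simp: goodS_def goodw_def frakS_def list_all_iff)

lemma good_in_LambdaD:
  assumes w: "w \<in> goodS X" and Zw: "\<forall>z. LD z \<in> set w \<longrightarrow> z \<in> Z"
  shows "w \<in> LambdaD (Sg X) Z"
proof -
  have letters: "\<forall>a\<in>set w. (\<exists>x\<in>X. a = Lx x) \<or> (\<exists>z\<in>Z. a = LD z)"
    using good_letters[OF w] Zw by fastforce
  have nd: "noDD w" using w by (simp add: goodS_def goodw_def)
  obtain a w' where aw: "w = a # w'" using goodS_ne[OF w] by (cases w) auto
  show ?thesis
  proof (cases "isD a")
    case False
    then have "w \<in> SPI (Sg X) Z" using nd letters aw by (intro SPI_intro) auto
    then show ?thesis unfolding LambdaD_eq by blast
  next
    case True
    then obtain z where a: "a = LD z" by (cases a) auto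
    have z: "z \<in> Z" using Zw aw a by auto
    show ?thesis
    proof (cases "w' = []")
      case True then show ?thesis using aw a z unfolding LambdaD_eq by (auto simp: DZ_iff)
    next
      case False
      have "noDD w'" "\<not> isD (hd w')" using nd aw a False by (auto simp: noDD_Cons)
      then have "w' \<in> SPI (Sg X) Z" using letters aw False by (intro SPI_intro) auto
      then have "[LD z] @ w' \<in> catset (DZ Z) (SPI (Sg X) Z)" using z by (intro catsetI DZI)
      then show ?thesis using aw a unfolding LambdaD_eq by auto
    qed
  qed
qed

lemma lsz_pos: "lsz a > 0" by (cases a) auto

lemma lsz_member: "a \<in> set w \<Longrightarrow> lsz a \<le> sum_list (map lsz w)"
  by (induction w) auto

lemma common_N:
  assumes "\<forall>z. LD z \<in> set w \<longrightarrow> (\<exists>n. z \<in> PhiN X n)"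
  shows "\<exists>N. \<forall>z. LD z \<in> set w \<longrightarrow> z \<in> PhiN X N"
  using assms
proof (induction w)
  case Nil then show ?case by simp
next
  case (Cons a w)
  then obtain N where N: "\<forall>z. LD z \<in> set w \<longrightarrow> z \<in> PhiN X N" by auto
  show ?case
  proof (cases a)
    case (Lx x) then show ?thesis using N by auto
  next
    case (LD z)
    then obtain n where n: "z \<in> PhiN X n" using Cons.prems by auto
    have "\<forall>z'. LD z' \<in> set (a # w) \<longrightarrow> z' \<in> PhiN X (max N n)"
      using N n LD PhiN_mono[of N "max N n" X] PhiN_mono[of n "max N n" X] by auto
    then show ?thesis by blast
  qed
qed

lemma good_in_Phi: "w \<in> goodS X \<Longrightarrow> \<exists>n. w \<in> PhiN X n"
proof (induction "sum_list (map lsz w)" arbitrary: w rule: less_induct)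
  case less
  have "\<forall>z. LD z \<in> set w \<longrightarrow> (\<exists>n. z \<in> PhiN X n)"
  proof (intro allI impI)
    fix z assume z: "LD z \<in> set w"
    then have zg: "z \<in> goodS X" using good_letters[OF less.prems z] by auto
    have lt: "sum_list (map lsz z) < sum_list (map lsz w)" using lsz_member[OF z] by simp
    show "\<exists>n. z \<in> PhiN X n" by (rule less.hyps[OF lt zg])
  qed
  then obtain N where "\<forall>z. LD z \<in> set w \<longrightarrow> z \<in> PhiN X N" using common_N by blast
  then have "w \<in> PhiN X (Suc N)" using good_in_LambdaD[OF less.prems] by simp
  then show ?case by blast
qed

lemma Phi_eq: "Phi X = goodS X"
proof
  show "Phi X \<subseteq> goodS X" unfolding Phi_def using PhiN_good by (intro UN_least) auto
  show "goodS X \<subseteq> Phi X"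
  proof
    fix w assume "w \<in> goodS X"
    then obtain n where "w \<in> PhiN X n" using good_in_Phi by blast
    then show "w \<in> Phi X" unfolding Phi_def by blast
  qed
qed


fun plist :: "('x letter list \<times> 'k::comm_ring_1) list \<Rightarrow> ('x,'k) poly" where
  "plist [] = pzero"
| "plist ((w,k) # ps) = padd (psmul k (pmono w)) (plist ps)"

lemma plist_KXD: "fst ` set ps \<subseteq> frakS X \<Longrightarrow> plist ps \<in> KXD X"
  by (induction ps rule: plist.induct) (auto intro!: KXD_closed)

lemma plist_append: "plist (ps @ qs) = padd (plist ps) (plist qs)"
  by (induction ps rule: plist.induct) (auto simp: padd_def pzero_def fun_eq_iff add.assoc)

lemma plist_smul: "psmul c (plist ps) = plist (map (\<lambda>(w,k). (w, c * k)) ps)"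
  by (induction ps rule: plist.induct) (auto simp: padd_def psmul_def pzero_def fun_eq_iff algebra_simps)

lemma plist_D: "pD (plist ps) = plist (map (\<lambda>(w,k). ([LD w], k)) ps)"
  by (induction ps rule: plist.induct) (auto simp: pD_padd pD_psmul)

definition lm :: "'x letter list \<Rightarrow> ('x,'k::comm_ring_1) poly \<Rightarrow> ('x,'k) poly" where
  "lm u p = (if u = [] then p else pmul (pmono u) p)"
definition rm :: "'x letter list \<Rightarrow> ('x,'k::comm_ring_1) poly \<Rightarrow> ('x,'k) poly" where
  "rm v p = (if v = [] then p else pmul p (pmono v))"

lemma lm_mono[simp]: "lm u (pmono w) = pmono (u @ w)" by (simp add: lm_def)
lemma rm_mono[simp]: "rm v (pmono w) = pmono (w @ v)" by (simp add: rm_def)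
lemma lm_lin: "lm u (padd p q) = padd (lm u p) (lm u q)" "lm u (psmul k p) = psmul k (lm u p)"
    "lm u (psub p q) = psub (lm u p) (lm u q)"
  by (simp_all add: lm_def pmul_padd_right pmul_psmul_right pmul_psub_right)
lemma rm_lin: "rm u (padd p q) = padd (rm u p) (rm u q)" "rm u (psmul k p) = psmul k (rm u p)"
    "rm u (psub p q) = psub (rm u p) (rm u q)"
  by (simp_all add: rm_def pmul_padd_left pmul_psmul_left pmul_psub_left)

declare dcl.simps(2)[simp del]

lemma psub_same: "psub p p = (pzero :: ('x,'k::comm_ring_1) poly)"
  by (simp add: psub_def pzero_def fun_eq_iff)

lemma aux_id: "psub (padd (padd P (psmul mu A)) (psmul mu B)) (psmul mu C) =
    psub P (padd (psmul (- mu) A) (padd (psmul (- mu) B) (psmul mu (C :: ('x,'k::comm_ring_1) poly))))"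
  by (simp add: fun_eq_iff psub_def padd_def psmul_def algebra_simps)

locale spanctx =
  fixes X :: "'x set" and lam mu :: "'k::comm_ring_1"
  assumes lmu: "lam * mu = 1"
begin

abbreviation "I \<equiv> IdT X (Tset X mu)"
abbreviation "V \<equiv> (KXD X :: ('x,'k) poly set)"

lemma I_V: "p \<in> I \<Longrightarrow> p \<in> V"
  using IdT_KXD[OF Tset_KXD] by blast

definition SPAN :: "nat \<Rightarrow> ('x,'k) poly set" where
  "SPAN n = {plist ps | ps. \<forall>(w,k)\<in>set ps. w \<in> goodS X \<and> dc w \<le> n}"

definition B :: "nat \<Rightarrow> ('x,'k) poly set" where
  "B n = {p \<in> V. \<exists>s\<in>SPAN n. psub p s \<in> I}"

lemma SPAN_V: "s \<in> SPAN n \<Longrightarrow> s \<in> V"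
  unfolding SPAN_def by (auto intro!: plist_KXD simp: goodS_def)

lemma B_V: "p \<in> B n \<Longrightarrow> p \<in> V" by (simp add: B_def)

lemma B_add: "p \<in> B n \<Longrightarrow> q \<in> B n \<Longrightarrow> padd p q \<in> B n"
proof -
  assume "p \<in> B n" "q \<in> B n"
  then obtain ps qs where p: "p \<in> V" "\<forall>(w,k)\<in>set ps. w \<in> goodS X \<and> dc w \<le> n" "psub p (plist ps) \<in> I"
    and q: "q \<in> V" "\<forall>(w,k)\<in>set qs. w \<in> goodS X \<and> dc w \<le> n" "psub q (plist qs) \<in> I"
    by (auto simp: B_def SPAN_def)
  have "psub (padd p q) (plist (ps @ qs)) = padd (psub p (plist ps)) (psub q (plist qs))"
    by (simp add: plist_append psub_def padd_def fun_eq_iff)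
  then have "psub (padd p q) (plist (ps @ qs)) \<in> I" using p q by (simp add: IdT_add)
  moreover have "plist (ps @ qs) \<in> SPAN n" using p q unfolding SPAN_def by (intro CollectI exI[of _ "ps @ qs"]) auto
  ultimately show ?thesis using p q unfolding B_def by (auto intro: KXD_padd)
qed

lemma B_smul: "p \<in> B n \<Longrightarrow> psmul c p \<in> B n"
proof -
  assume "p \<in> B n"
  then obtain ps where p: "p \<in> V" "\<forall>(w,k)\<in>set ps. w \<in> goodS X \<and> dc w \<le> n" "psub p (plist ps) \<in> I"
    by (auto simp: B_def SPAN_def)
  have "psub (psmul c p) (psmul c (plist ps)) = psmul c (psub p (plist ps))"
    by (simp add: psub_def psmul_def fun_eq_iff algebra_simps)
  then have "psub (psmul c p) (plist (map (\<lambda>(w,k). (w, c * k)) ps)) \<in> I"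
    using p by (simp add: IdT_smul plist_smul)
  moreover have "plist (map (\<lambda>(w,k). (w, c * k)) ps) \<in> SPAN n" using p unfolding SPAN_def
    by (intro CollectI exI[of _ "map (\<lambda>(w,k). (w, c * k)) ps"]) auto
  ultimately show ?thesis using p unfolding B_def by (auto intro: KXD_psmul)
qed

lemma B_zero: "pzero \<in> B n"
proof -
  have "plist [] \<in> SPAN n" unfolding SPAN_def by (intro CollectI exI[of _ "[]"]) simp
  moreover have "psub pzero (plist []) \<in> I" by (simp add: psub_same IdT_zero)
  ultimately show ?thesis unfolding B_def by auto
qed

lemma B_sub: "p \<in> B n \<Longrightarrow> q \<in> B n \<Longrightarrow> psub p q \<in> B n"
  by (simp add: psub_as_padd B_add B_smul)

lemma SPAN_mono: "m \<le> n \<Longrightarrow> SPAN m \<subseteq> SPAN n"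
  unfolding SPAN_def by fastforce

lemma B_mono: "m \<le> n \<Longrightarrow> p \<in> B m \<Longrightarrow> p \<in> B n"
  unfolding B_def using SPAN_mono by blast

lemma B_I: "p \<in> V \<Longrightarrow> q \<in> B n \<Longrightarrow> psub p q \<in> I \<Longrightarrow> p \<in> B n"
proof -
  assume p: "p \<in> V" and "q \<in> B n" and d: "psub p q \<in> I"
  then obtain s where s: "s \<in> SPAN n" "psub q s \<in> I" by (auto simp: B_def)
  have "psub p s = padd (psub p q) (psub q s)" by (simp add: psub_def padd_def fun_eq_iff)
  then have "psub p s \<in> I" using d s by (simp add: IdT_add)
  then show ?thesis using p s unfolding B_def by auto
qed

lemma B_good: "w \<in> goodS X \<Longrightarrow> dc w \<le> n \<Longrightarrow> pmono w \<in> B n"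
proof -
  assume w: "w \<in> goodS X" "dc w \<le> n"
  have "plist [(w, 1)] \<in> SPAN n" unfolding SPAN_def using w by (intro CollectI exI[of _ "[(w,1)]"]) simp
  moreover have "psub (pmono w) (plist [(w,1)]) \<in> I"
    by (simp add: psub_same IdT_zero)
  moreover have "pmono w \<in> V" using w KXD_pmono[of w X] by (simp add: goodS_def)
  ultimately show ?thesis unfolding B_def by auto
qed

lemma B_D: "p \<in> B n \<Longrightarrow> pD p \<in> B (Suc n)"
proof -
  assume "p \<in> B n"
  then obtain ps where p: "p \<in> V" "\<forall>(w,k)\<in>set ps. w \<in> goodS X \<and> dc w \<le> n" "psub p (plist ps) \<in> I"
    by (auto simp: B_def SPAN_def)
  have "psub (pD p) (plist (map (\<lambda>(w,k). ([LD w], k)) ps)) \<in> I"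
    using p by (simp add: plist_D[symmetric] pD_psub[symmetric] IdT_D)
  moreover have "plist (map (\<lambda>(w,k). ([LD w], k)) ps) \<in> SPAN (Suc n)"
    using p unfolding SPAN_def
    by (intro CollectI exI[of _ "map (\<lambda>(w,k). ([LD w], k)) ps"]) (auto intro: goodS_LD simp: dc_def)
  ultimately show ?thesis using p unfolding B_def by (auto intro: KXD_pD)
qed

lemma lm_I: "u = [] \<or> u \<in> frakS X \<Longrightarrow> p \<in> I \<Longrightarrow> lm u p \<in> I"
  by (auto simp: lm_def intro: IdT_lmul KXD_pmono)
lemma rm_I: "u = [] \<or> u \<in> frakS X \<Longrightarrow> p \<in> I \<Longrightarrow> rm u p \<in> I"
  by (auto simp: rm_def intro: IdT_rmul KXD_pmono)

lemma tT_expand: "tT mu x y = psub (padd (padd (pmono [LD x, LD y]) (psmul mu (pmono (LD x # y))))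
      (psmul mu (pmono (x @ [LD y])))) (psmul mu (pmono [LD (x @ y)]))"
  by (simp add: tT_def)


lemma good_split_last:
  assumes g: "g \<in> goodS X" and d: "isD (last g)"
  obtains g' x where "g = g' @ [LD x]" "x \<in> goodS X" "g' = [] \<or> (g' \<in> goodS X \<and> \<not> isD (last g'))"
proof -
  have ne: "g \<noteq> []" using goodS_ne[OF g] .
  obtain x where lx: "last g = LD x" using d by (cases "last g") auto
  define g' where "g' = butlast g"
  have gs: "g = g' @ [LD x]" using ne lx append_butlast_last_id[of g] by (simp add: g'_def)
  have "LD x \<in> set g" using gs by simp
  then have x: "x \<in> goodS X" using good_letters[OF g] by auto
  have gw: "goodw g'" "\<not> (g' \<noteq> [] \<and> isD (last g'))" using g gs by (auto simp: goodS_def goodw_append)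
  have "g' \<noteq> [] \<Longrightarrow> g' \<in> frakS X" using g gs by (auto simp: goodS_def frakS_def)
  then have "g' = [] \<or> (g' \<in> goodS X \<and> \<not> isD (last g'))" using gw by (auto simp: goodS_def)
  then show ?thesis using that gs x by blast
qed

lemma good_split_first:
  assumes h: "h \<in> goodS X" and d: "isD (hd h)"
  obtains y h' where "h = LD y # h'" "y \<in> goodS X" "h' = [] \<or> (h' \<in> goodS X \<and> \<not> isD (hd h'))"
proof -
  have ne: "h \<noteq> []" using goodS_ne[OF h] .
  obtain y h' where hs: "h = LD y # h'" using d ne by (cases h; cases "hd h") auto
  have "LD y \<in> set h" using hs by simp
  then have y: "y \<in> goodS X" using good_letters[OF h] by auto
  have gw: "goodw h'" "\<not> (h' \<noteq> [] \<and> isD (hd h'))" using h hs by (auto simp: goodS_def goodw_Cons)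
  have "h' \<noteq> [] \<Longrightarrow> h' \<in> frakS X" using h hs by (auto simp: goodS_def frakS_def)
  then have "h' = [] \<or> (h' \<in> goodS X \<and> \<not> isD (hd h'))" using gw by (auto simp: goodS_def)
  then show ?thesis using that hs y by blast
qed

lemma goodS_cat1: "x \<in> goodS X \<Longrightarrow> g' = [] \<or> (g' \<in> goodS X \<and> \<not> isD (last g')) \<Longrightarrow> g' @ x \<in> goodS X"
  by (auto intro: goodS_append)
lemma goodS_cat2: "y \<in> goodS X \<Longrightarrow> h' = [] \<or> (h' \<in> goodS X \<and> \<not> isD (hd h')) \<Longrightarrow> y @ h' \<in> goodS X"
  by (auto intro: goodS_append)

lemma lm_B:
  assumes IH: "\<And>m' n' p q. m' + n' < N \<Longrightarrow> p \<in> B m' \<Longrightarrow> q \<in> B n' \<Longrightarrow> pmul p q \<in> B (m' + n')"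
    and g: "g' = [] \<or> (g' \<in> goodS X \<and> \<not> isD (last g'))" and P: "P \<in> B k" and lt: "dc g' + k < N"
  shows "lm g' P \<in> B (dc g' + k)"
proof (cases "g' = []")
  case True then show ?thesis using P by (simp add: lm_def)
next
  case False
  then have "pmono g' \<in> B (dc g')" using g by (auto intro: B_good)
  then show ?thesis using IH[OF lt _ P] False by (simp add: lm_def)
qed

lemma rm_B:
  assumes IH: "\<And>m' n' p q. m' + n' < N \<Longrightarrow> p \<in> B m' \<Longrightarrow> q \<in> B n' \<Longrightarrow> pmul p q \<in> B (m' + n')"
    and h: "h' = [] \<or> (h' \<in> goodS X \<and> \<not> isD (hd h'))" and P: "P \<in> B k" and lt: "k + dc h' < N"
  shows "rm h' P \<in> B (k + dc h')"
proof (cases "h' = []")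
  case True then show ?thesis using P by (simp add: rm_def)
next
  case False
  then have "pmono h' \<in> B (dc h')" using h by (auto intro: B_good)
  then show ?thesis using IH[OF lt P] False by (simp add: rm_def)
qed

lemma B_mul_core:
  assumes IH: "\<And>m' n' p q. m' + n' < m + n \<Longrightarrow> p \<in> B m' \<Longrightarrow> q \<in> B n' \<Longrightarrow> pmul p q \<in> B (m' + n')"
    and g: "g \<in> goodS X" "dc g \<le> m" and h: "h \<in> goodS X" "dc h \<le> n"
  shows "pmono (g @ h) \<in> B (m + n)"
proof (cases "isD (last g) \<and> isD (hd h)")
  case False
  then have "g @ h \<in> goodS X" using g h by (intro goodS_append) auto
  then show ?thesis using g h by (intro B_good) auto
next
  case True
  obtain g' x where gx: "g = g' @ [LD x]" "x \<in> goodS X" "g' = [] \<or> (g' \<in> goodS X \<and> \<not> isD (last g'))"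
    using good_split_last[OF g(1)] True by blast
  obtain y h' where hy: "h = LD y # h'" "y \<in> goodS X" "h' = [] \<or> (h' \<in> goodS X \<and> \<not> isD (hd h'))"
    using good_split_first[OF h(1)] True by blast
  have dg: "dc g = dc g' + Suc (dc x)" using gx by simp
  have dh: "dc h = Suc (dc y) + dc h'" using hy by simp
  have xV: "x \<in> frakS X" "y \<in> frakS X" using gx hy by (auto simp: goodS_def)
  have g'V: "g' = [] \<or> g' \<in> frakS X" "h' = [] \<or> h' \<in> frakS X" using gx hy by (auto simp: goodS_def)
  define A where "A = (pmul (pmono g) (pmono (y @ h')) :: ('x,'k) poly)"
  define Bm where "Bm = (pmul (pmono (g' @ x)) (pmono h) :: ('x,'k) poly)"
  define Cm where "Cm = (lm g' (rm h' (pD (pmul (pmono x) (pmono y)))) :: ('x,'k) poly)"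
  have AB: "A \<in> B (m + n)"
  proof -
    have b1: "pmono (y @ h') \<in> B (n - 1)" using goodS_cat2[OF hy(2,3)] h dh by (intro B_good) auto
    have b2: "pmono g \<in> B m" using g by (intro B_good) auto
    have lt: "m + (n - 1) < m + n" using h dh by auto
    have "A \<in> B (m + (n - 1))" unfolding A_def by (rule IH[OF lt b2 b1])
    then show ?thesis by (rule B_mono[rotated]) auto
  qed
  have BB: "Bm \<in> B (m + n)"
  proof -
    have b1: "pmono (g' @ x) \<in> B (m - 1)" using goodS_cat1[OF gx(2,3)] g dg by (intro B_good) auto
    have b2: "pmono h \<in> B n" using h by (intro B_good) auto
    have lt: "(m - 1) + n < m + n" using g dg by auto
    have "Bm \<in> B ((m - 1) + n)" unfolding Bm_def by (rule IH[OF lt b1 b2])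
    then show ?thesis by (rule B_mono[rotated]) auto
  qed
  have CB: "Cm \<in> B (m + n)"
  proof -
    have b1: "pmono x \<in> B (dc x)" "pmono y \<in> B (dc y)" using gx hy by (auto intro: B_good)
    have lt: "dc x + dc y < m + n" using g h dg dh by auto
    have "pmul (pmono x) (pmono y) \<in> B (dc x + dc y)" by (rule IH[OF lt b1])
    then have "pD (pmul (pmono x) (pmono y)) \<in> B (Suc (dc x + dc y))" by (rule B_D)
    then have "rm h' (pD (pmul (pmono x) (pmono y))) \<in> B (Suc (dc x + dc y) + dc h')"
      using g h dg dh by (intro rm_B[OF IH hy(3)]) auto
    then have "Cm \<in> B (dc g' + (Suc (dc x + dc y) + dc h'))"
      unfolding Cm_def using g h dg dh by (intro lm_B[OF IH gx(3)]) auto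
    then show ?thesis by (rule B_mono[rotated]) (use g h dg dh in auto)
  qed
  define S where "S = padd (psmul (- mu) A) (padd (psmul (- mu) Bm) (psmul mu Cm))"
  have SB: "S \<in> B (m + n)" unfolding S_def using AB BB CB by (intro B_add B_smul)
  define E where "E = lm g' (rm h' (tT mu x y))"
  have EI: "E \<in> I" unfolding E_def using g'V xV
    by (intro lm_I rm_I IdT_T tT_Tset) auto
  have e1: "E = psub (padd (padd (pmono (g @ h)) (psmul mu A)) (psmul mu Bm)) (psmul mu Cm)"
  proof -
    have l1: "g' @ ([LD x, LD y] @ h') = g @ h" "g' @ ((LD x # y) @ h') = g @ y @ h'"
      "g' @ ((x @ [LD y]) @ h') = (g' @ x) @ h" using gx(1) hy(1) by simp_all
    have A': "A = pmono (g @ y @ h')" unfolding A_def by (simp only: pmul_mono)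
    have B': "Bm = pmono ((g' @ x) @ h)" unfolding Bm_def by (simp only: pmul_mono)
    have C': "Cm = pmono (g' @ ([LD (x @ y)] @ h'))" unfolding Cm_def by (simp only: pmul_mono pD_pmono rm_mono lm_mono)
    show ?thesis unfolding E_def tT_expand A' B' C'
      by (simp only: lm_lin rm_lin lm_mono rm_mono l1)
  qed
  have "E = psub (pmono (g @ h)) S"
    unfolding e1 S_def by (rule aux_id)
  then have D: "psub (pmono (g @ h)) S \<in> I" using EI by simp
  have VV: "pmono (g @ h) \<in> V" using g h by (intro KXD_pmono frakS_append) (auto simp: goodS_def)
  show ?thesis by (rule B_I[OF VV SB D])
qed

lemma B_mul_span:
  assumes IH: "\<And>m' n' p q. m' + n' < m + n \<Longrightarrow> p \<in> B m' \<Longrightarrow> q \<in> B n' \<Longrightarrow> pmul p q \<in> B (m' + n')"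
    and ps: "\<forall>(w,k)\<in>set ps. w \<in> goodS X \<and> dc w \<le> m" and qs: "\<forall>(w,k)\<in>set qs. w \<in> goodS X \<and> dc w \<le> n"
  shows "pmul (plist ps) (plist qs) \<in> B (m + n)"
  using ps
proof (induction ps rule: plist.induct)
  case 1 then show ?case by (simp add: B_zero)
next
  case (2 w k ps)
  have "pmul (pmono w) (plist qs) \<in> B (m + n)"
    using qs
  proof (induction qs rule: plist.induct)
    case 1 then show ?case by (simp add: B_zero)
  next
    case (2 w' k' qs)
    then show ?case using B_mul_core[OF IH, where g = w and h = w'] "2.prems" \<open>\<forall>(w,k)\<in>set ((w, k) # ps). w \<in> goodS X \<and> dc w \<le> m\<close>
      by (auto simp: pmul_padd_right pmul_psmul_right intro!: B_add B_smul)
  qed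
  then show ?case using 2 by (auto simp: pmul_padd_left pmul_psmul_left intro!: B_add B_smul)
qed

lemma B_mul: "p \<in> B m \<Longrightarrow> q \<in> B n \<Longrightarrow> pmul p q \<in> B (m + n)"
proof (induction "m + n" arbitrary: m n p q rule: less_induct)
  case less
  obtain ps where p: "p \<in> V" "\<forall>(w,k)\<in>set ps. w \<in> goodS X \<and> dc w \<le> m" "psub p (plist ps) \<in> I"
    using less.prems(1) by (auto simp: B_def SPAN_def)
  obtain qs where q: "q \<in> V" "\<forall>(w,k)\<in>set qs. w \<in> goodS X \<and> dc w \<le> n" "psub q (plist qs) \<in> I"
    using less.prems(2) by (auto simp: B_def SPAN_def)
  have sV: "plist ps \<in> V" "plist qs \<in> V" using p q by (auto intro!: plist_KXD simp: goodS_def)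
  have span: "pmul (plist ps) (plist qs) \<in> B (m + n)"
    using less.hyps p q by (intro B_mul_span) auto
  have "psub (pmul p q) (pmul (plist ps) (plist qs)) =
        padd (pmul (psub p (plist ps)) q) (pmul (plist ps) (psub q (plist qs)))"
    by (simp add: pmul_psub_left pmul_psub_right) (simp add: fun_eq_iff psub_def padd_def)
  moreover have "padd (pmul (psub p (plist ps)) q) (pmul (plist ps) (psub q (plist qs))) \<in> I"
    using p q sV by (intro IdT_add IdT_rmul IdT_lmul) auto
  ultimately have D: "psub (pmul p q) (pmul (plist ps) (plist qs)) \<in> I" by simp
  have VV: "pmul p q \<in> V" using p q by (simp add: KXD_pmul)
  show ?case by (rule B_I[OF VV span D])
qed

lemma word_B: "w \<in> frakS X \<Longrightarrow> pmono w \<in> B (dc w)"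
proof -
  have list_case: "\<And>w. \<forall>a\<in>set w. wfl X a \<longrightarrow> pmono [a] \<in> B (dcl a) \<Longrightarrow>
      w \<noteq> [] \<Longrightarrow> list_all (wfl X) w \<Longrightarrow> pmono w \<in> B (dc w)"
  proof -
    fix w :: "'x letter list"
    show "\<forall>a\<in>set w. wfl X a \<longrightarrow> pmono [a] \<in> B (dcl a) \<Longrightarrow>
      w \<noteq> [] \<Longrightarrow> list_all (wfl X) w \<Longrightarrow> pmono w \<in> B (dc w)"
    proof (induction w rule: induct_list012)
      case 1 then show ?case by simp
    next
      case (2 a) then show ?case by simp
    next
      case (3 a b r)
      have "pmul (pmono [a]) (pmono (b # r)) \<in> B (dcl a + dc (b # r))"
        using 3 by (intro B_mul) auto
      then show ?case by simp
    qed
  qed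
  have letter_case: "wfl X a \<Longrightarrow> pmono [a] \<in> B (dcl a)" for a
  proof (induction a)
    case (Lx x)
    then have "[Lx x] \<in> goodS X" by (simp add: goodS_def frakS_def)
    then show ?case by (intro B_good) auto
  next
    case (LD w)
    then have "pmono w \<in> B (dc w)" by (intro list_case) auto
    then have "pD (pmono w) \<in> B (Suc (dc w))" by (rule B_D)
    then show ?case by simp
  qed
  assume "w \<in> frakS X"
  then show ?thesis using list_case[of w] letter_case by (auto simp: frakS_def list_all_iff)
qed

lemma poly_B: "p \<in> V \<Longrightarrow> \<exists>n. p \<in> B n"
proof (induction p rule: poly_induct)
  case zero then show ?case using B_zero by blast
next
  case (step k w q)
  then obtain n where n: "q \<in> B n" by blast
  have "pmono w \<in> B (dc w)" using step by (simp add: word_B)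
  then have "pmono w \<in> B (max n (dc w))" by (rule B_mono[rotated]) auto
  then have "psmul k (pmono w) \<in> B (max n (dc w))" by (rule B_smul)
  moreover have "q \<in> B (max n (dc w))" using n by (rule B_mono[rotated]) auto
  ultimately have "padd (psmul k (pmono w)) q \<in> B (max n (dc w))" by (rule B_add)
  then show ?case by blast
qed

lemma spanning: "p \<in> V \<Longrightarrow> \<exists>ps. fst ` set ps \<subseteq> goodS X \<and> psub p (plist ps) \<in> I"
proof -
  assume "p \<in> V"
  then obtain n where "p \<in> B n" using poly_B by blast
  then obtain ps where "\<forall>(w,k)\<in>set ps. w \<in> goodS X \<and> dc w \<le> n" "psub p (plist ps) \<in> I"
    by (auto simp: B_def SPAN_def)
  then show ?thesis by (intro exI[of _ ps]) auto
qed

end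


section \<open>The model: free algebra on X x nat with shift\<close>

definition shw :: "('x \<times> nat) list \<Rightarrow> ('x \<times> nat) list" where
  "shw m = map (\<lambda>(x,n). (x, Suc n)) m"
definition dec :: "('x \<times> nat) list \<Rightarrow> ('x \<times> nat) list" where
  "dec m = map (\<lambda>(x,n). (x, n - 1)) m"
definition allpos :: "('x \<times> nat) list \<Rightarrow> bool" where
  "allpos m = (\<forall>(x,n)\<in>set m. 0 < n)"
definition msh :: "(('x \<times> nat) list \<Rightarrow> 'k::zero) \<Rightarrow> ('x \<times> nat) list \<Rightarrow> 'k" where
  "msh p w = (if allpos w then p (dec w) else 0)"
definition wt :: "('x \<times> nat) list \<Rightarrow> nat" where
  "wt m = sum_list (map snd m)"

lemma allpos_shw[simp]: "allpos (shw m)" by (auto simp: allpos_def shw_def)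
lemma dec_shw[simp]: "dec (shw m) = m" by (induction m) (auto simp: dec_def shw_def)
lemma shw_dec: "allpos w \<Longrightarrow> shw (dec w) = w" by (induction w) (auto simp: dec_def shw_def allpos_def)
lemma msh_shw[simp]: "msh p (shw m) = p m" by (simp add: msh_def)
lemma msh_nz: "msh p w \<noteq> 0 \<Longrightarrow> \<exists>m. w = shw m \<and> p m \<noteq> 0"
  by (auto simp: msh_def shw_dec split: if_splits intro: exI[of _ "dec w"])
lemma length_shw[simp]: "length (shw m) = length m" by (simp add: shw_def)
lemma wt_shw: "wt (shw m) = wt m + length m" by (induction m) (auto simp: shw_def wt_def)
lemma wt_append[simp]: "wt (u @ v) = wt u + wt v" by (simp add: wt_def)
lemma shw_inj: "shw a = shw b \<Longrightarrow> a = b"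
proof -
  assume "shw a = shw b"
  then have "dec (shw a) = dec (shw b)" by simp
  then show ?thesis by simp
qed

lemma allpos_append[simp]: "allpos (u @ v) \<longleftrightarrow> allpos u \<and> allpos v"
  by (auto simp: allpos_def)

lemma msh_cmul: "msh (cmul p q) = cmul (msh p) (msh q)"
proof
  fix w
  show "msh (cmul p q) w = cmul (msh p) (msh q) w"
  proof (cases "allpos w")
    case True
    have "msh (cmul p q) w = (\<Sum>i\<in>{0..length (dec w)}. p (take i (dec w)) * q (drop i (dec w)))"
      using True by (simp add: msh_def cmul_def)
    also have "\<dots> = (\<Sum>i\<in>{0..length w}. msh p (take i w) * msh q (drop i w))"
    proof (rule sum.cong)
      show "{0..length (dec w)} = {0..length w}" by (simp add: dec_def)
    next
      fix i assume "i \<in> {0..length w}"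
      have a: "allpos (take i w)" "allpos (drop i w)" using True
        by (metis allpos_append append_take_drop_id)+
      show "p (take i (dec w)) * q (drop i (dec w)) = msh p (take i w) * msh q (drop i w)"
        using a by (simp add: msh_def dec_def take_map drop_map)
    qed
    finally show ?thesis by (simp add: cmul_def)
  next
    case False
    have "\<forall>i. msh p (take i w) * msh q (drop i w) = 0"
    proof
      fix i
      have "\<not> allpos (take i w) \<or> \<not> allpos (drop i w)" using False
        by (metis allpos_append append_take_drop_id)
      then show "msh p (take i w) * msh q (drop i w) = 0" by (auto simp: msh_def)
    qed
    then show ?thesis using False by (simp add: msh_def cmul_def)
  qed
qed

definition Mdl :: "'k::comm_ring_1 \<Rightarrow> ('k, ('x \<times> nat) list \<Rightarrow> 'k) kdalg" where
  "Mdl mu = \<lparr> carrier = {p. finite {w. p w \<noteq> 0}}, add = (\<lambda>p q w. p w + q w), zero = (\<lambda>w. 0),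
     mult = cmul, smul = (\<lambda>k p w. k * p w), der = (\<lambda>p w. mu * (msh p w - p w)) \<rparr>"

lemma Mdl_simps[simp]: "carrier (Mdl mu) = {p. finite {w. p w \<noteq> 0}}" "add (Mdl mu) = (\<lambda>p q w. p w + q w)"
  "zero (Mdl mu) = (\<lambda>w. 0)" "mult (Mdl mu) = cmul" "smul (Mdl mu) = (\<lambda>k p w. k * p w)"
  "der (Mdl mu) = (\<lambda>p w. mu * (msh p w - p w))"
  by (simp_all add: Mdl_def)

lemma fin_add: "finite {w. p w \<noteq> 0} \<Longrightarrow> finite {w. q w \<noteq> 0} \<Longrightarrow> finite {w. p w + q w \<noteq> (0::'k::comm_ring_1)}"
proof -
  assume a: "finite {w. p w \<noteq> 0}" "finite {w. q w \<noteq> 0}"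
  have "{w. p w + q w \<noteq> 0} \<subseteq> {w. p w \<noteq> 0} \<union> {w. q w \<noteq> 0}" by auto
  then show ?thesis using a by (auto elim: finite_subset)
qed
lemma fin_smul: "finite {w. p w \<noteq> 0} \<Longrightarrow> finite {w. k * p w \<noteq> (0::'k::comm_ring_1)}"
proof -
  assume a: "finite {w. p w \<noteq> 0}"
  have "{w. k * p w \<noteq> 0} \<subseteq> {w. p w \<noteq> 0}" by auto
  then show ?thesis using a by (auto elim: finite_subset)
qed
lemma fin_msh: "finite {w. p w \<noteq> 0} \<Longrightarrow> finite {w. msh p w \<noteq> (0::'k::comm_ring_1)}"
proof -
  assume a: "finite {w. p w \<noteq> 0}"
  have "{w. msh p w \<noteq> 0} \<subseteq> shw ` {w. p w \<noteq> 0}" by (auto dest!: msh_nz)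
  then show ?thesis using a by (auto elim: finite_subset)
qed
lemma fin_der: "finite {w. p w \<noteq> 0} \<Longrightarrow> finite {w. mu * (msh p w - p w) \<noteq> (0::'k::comm_ring_1)}"
proof -
  assume a: "finite {w. p w \<noteq> 0}"
  have "{w. mu * (msh p w - p w) \<noteq> 0} \<subseteq> {w. msh p w \<noteq> 0} \<union> {w. p w \<noteq> 0}" by auto
  then show ?thesis using a fin_msh[OF a] by (auto elim: finite_subset)
qed

lemma Mdl_kalgebra: "kalgebra (Mdl (mu::'k::comm_ring_1) :: ('k, ('x \<times> nat) list \<Rightarrow> 'k) kdalg)"
  unfolding kalgebra_def Mdl_simps
proof (intro conjI ballI allI)
  fix a b :: "('x \<times> nat) list \<Rightarrow> 'k"
  assume "a \<in> {p. finite {w. p w \<noteq> 0}}" "b \<in> {p. finite {w. p w \<noteq> 0}}"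
  then show "(\<lambda>w. a w + b w) \<in> {p. finite {w. p w \<noteq> 0}}" "cmul a b \<in> {p. finite {w. p w \<noteq> 0}}"
    by (auto intro: fin_add cmul_finite)
  show "(\<lambda>w. a w + b w) = (\<lambda>w. b w + a w)" by (simp add: add.commute)
next
  fix k and a :: "('x \<times> nat) list \<Rightarrow> 'k" assume "a \<in> {p. finite {w. p w \<noteq> 0}}"
  then show "(\<lambda>w. k * a w) \<in> {p. finite {w. p w \<noteq> 0}}" by (auto intro: fin_smul)
next
  fix a :: "('x \<times> nat) list \<Rightarrow> 'k" assume a: "a \<in> {p. finite {w. p w \<noteq> 0}}"
  show "\<exists>b\<in>{p. finite {w. p w \<noteq> 0}}. (\<lambda>w. a w + b w) = (\<lambda>w. 0)"
    using a by (intro bexI[of _ "\<lambda>w. - a w"]) auto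
qed (auto simp: cmul_assoc cmul_add_left cmul_add_right cmul_smul_left cmul_smul_right
               algebra_simps fun_eq_iff)

lemma Mdl_lda:
  assumes lm: "lam * mu = (1::'k::comm_ring_1)"
  shows "lambda_diff_alg lam (Mdl mu :: ('k, ('x \<times> nat) list \<Rightarrow> 'k) kdalg)"
  unfolding lambda_diff_alg_def
proof (intro conjI ballI allI Mdl_kalgebra)
  fix a :: "('x \<times> nat) list \<Rightarrow> 'k" assume "a \<in> carrier (Mdl mu)"
  then show "der (Mdl mu) a \<in> carrier (Mdl mu)" by (auto intro: fin_der)
next
  fix k and a :: "('x \<times> nat) list \<Rightarrow> 'k"
  show "der (Mdl mu) (smul (Mdl mu) k a) = smul (Mdl mu) k (der (Mdl mu) a)"
    by (simp add: msh_def fun_eq_iff algebra_simps)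
next
  fix a b :: "('x \<times> nat) list \<Rightarrow> 'k"
  show "der (Mdl mu) (add (Mdl mu) a b) = add (Mdl mu) (der (Mdl mu) a) (der (Mdl mu) b)"
    by (simp add: msh_def fun_eq_iff algebra_simps)
  have id: "mu * (a' * b' - a0 * b0) = mu * (a' - a0) * b0 + a0 * (mu * (b' - b0)) + lam * (mu * (a' - a0) * (mu * (b' - b0)))"
    for a' a0 b' b0 :: 'k
  proof -
    have "lam * (mu * (a' - a0) * (mu * (b' - b0))) = (lam * mu) * (mu * ((a' - a0) * (b' - b0)))"
      by (simp add: algebra_simps)
    then show ?thesis using lm by (simp add: algebra_simps)
  qed
  show "der (Mdl mu) (mult (Mdl mu) a b) =
          add (Mdl mu) (add (Mdl mu) (mult (Mdl mu) (der (Mdl mu) a) b) (mult (Mdl mu) a (der (Mdl mu) b)))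
                (smul (Mdl mu) lam (mult (Mdl mu) (der (Mdl mu) a) (der (Mdl mu) b)))"
  proof (simp add: msh_cmul, rule ext)
    fix w :: "('x \<times> nat) list"
    let ?S = "{0..length w}"
    have "mu * (cmul (msh a) (msh b) w - cmul a b w) =
        (\<Sum>i\<in>?S. mu * (msh a (take i w) * msh b (drop i w) - a (take i w) * b (drop i w)))"
      by (simp add: cmul_def sum_subtractf[symmetric] sum_distrib_left)
    also have "\<dots> = (\<Sum>i\<in>?S. mu * (msh a (take i w) - a (take i w)) * b (drop i w)
        + a (take i w) * (mu * (msh b (drop i w) - b (drop i w)))
        + lam * (mu * (msh a (take i w) - a (take i w)) * (mu * (msh b (drop i w) - b (drop i w)))))"
      by (rule sum.cong) (auto simp: id)
    also have "\<dots> = cmul (\<lambda>w. mu * (msh a w - a w)) b w + cmul a (\<lambda>w. mu * (msh b w - b w)) w +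
        lam * cmul (\<lambda>w. mu * (msh a w - a w)) (\<lambda>w. mu * (msh b w - b w)) w"
      by (simp add: cmul_def sum.distrib sum_distrib_left)
    finally show "mu * (cmul (msh a) (msh b) w - cmul a b w) =
        cmul (\<lambda>w. mu * (msh a w - a w)) b w + cmul a (\<lambda>w. mu * (msh b w - b w)) w +
        lam * cmul (\<lambda>w. mu * (msh a w - a w)) (\<lambda>w. mu * (msh b w - b w)) w" .
  qed
qed


section \<open>Leading terms\<close>

fun LTl :: "'x letter \<Rightarrow> ('x \<times> nat) list" where
  "LTl (Lx x) = [(x, 0)]"
| "LTl (LD w) = shw (concat (map LTl w))"

definition LTw :: "'x letter list \<Rightarrow> ('x \<times> nat) list" where
  "LTw w = concat (map LTl w)"

lemma LTl_LD: "LTl (LD w) = shw (LTw w)" by (simp add: LTw_def)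
declare LTl.simps(2)[simp del]
lemma LTw_simps[simp]: "LTw [] = []" "LTw (a # w) = LTl a @ LTw w" by (simp_all add: LTw_def)

fun xcl :: "'x letter \<Rightarrow> nat" where
  "xcl (Lx x) = 1"
| "xcl (LD w) = sum_list (map xcl w)"

definition xcw :: "'x letter list \<Rightarrow> nat" where
  "xcw w = sum_list (map xcl w)"
lemma xcl_LD: "xcl (LD w) = xcw w" by (simp add: xcw_def)
declare xcl.simps(2)[simp del]
lemma xcw_simps[simp]: "xcw [] = 0" "xcw (a # w) = xcl a + xcw w" by (simp_all add: xcw_def)

definition LTP :: "(('x \<times> nat) list \<Rightarrow> 'k::comm_ring_1) \<Rightarrow> ('x \<times> nat) list \<Rightarrow> 'k \<Rightarrow> nat \<Rightarrow> bool" where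
  "LTP p m c L \<longleftrightarrow> p m = c \<and> length m = L \<and> (\<forall>m'. p m' \<noteq> 0 \<longrightarrow> length m' = L)
     \<and> (\<forall>m'. p m' \<noteq> 0 \<longrightarrow> m' \<noteq> m \<longrightarrow> wt m' < wt m)"

lemma LTP_le: "LTP p m c L \<Longrightarrow> p m' \<noteq> 0 \<Longrightarrow> wt m' \<le> wt m"
  unfolding LTP_def by (cases "m' = m") auto

lemma LTP_cmul:
  assumes p: "LTP p m1 c1 L1" and q: "LTP q m2 c2 L2"
  shows "LTP (cmul p q) (m1 @ m2) (c1 * c2) (L1 + L2)"
proof -
  have l1: "length m1 = L1" and l2: "length m2 = L2" using p q by (auto simp: LTP_def)
  have val: "cmul p q (m1 @ m2) = c1 * c2"
  proof -
    let ?f = "\<lambda>i. p (take i (m1 @ m2)) * q (drop i (m1 @ m2))"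
    have z: "\<forall>i\<in>{0..length (m1 @ m2)} - {length m1}. ?f i = 0"
    proof
      fix i assume i: "i \<in> {0..length (m1 @ m2)} - {length m1}"
      show "?f i = 0"
      proof (rule ccontr)
        assume "?f i \<noteq> 0"
        then have "p (take i (m1 @ m2)) \<noteq> 0" by auto
        then have "length (take i (m1 @ m2)) = L1" using p by (auto simp: LTP_def)
        then show False using i l1 by auto
      qed
    qed
    have "cmul p q (m1 @ m2) = (\<Sum>i\<in>{0..length (m1 @ m2)}. ?f i)" by (simp add: cmul_def)
    also have "\<dots> = ?f (length m1) + (\<Sum>i\<in>{0..length (m1 @ m2)} - {length m1}. ?f i)"
      by (rule sum.remove) auto
    also have "(\<Sum>i\<in>{0..length (m1 @ m2)} - {length m1}. ?f i) = 0"
      using z by (intro sum.neutral) blast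
    also have "?f (length m1) + 0 = ?f (length m1)" by simp
    also have "\<dots> = c1 * c2" using p q by (simp add: LTP_def)
    finally show ?thesis .
  qed
  have len: "\<forall>m'. cmul p q m' \<noteq> 0 \<longrightarrow> length m' = L1 + L2"
    using p q by (auto dest!: cmul_supp simp: LTP_def)
  have wtc: "\<forall>m'. cmul p q m' \<noteq> 0 \<longrightarrow> m' \<noteq> m1 @ m2 \<longrightarrow> wt m' < wt (m1 @ m2)"
  proof (intro allI impI)
    fix m' assume nz: "cmul p q m' \<noteq> 0" and ne: "m' \<noteq> m1 @ m2"
    then obtain u v where uv: "m' = u @ v" "p u \<noteq> 0" "q v \<noteq> 0" by (auto dest!: cmul_supp)
    have a: "wt u \<le> wt m1" "wt v \<le> wt m2" using uv LTP_le p q by blast+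
    have "u \<noteq> m1 \<or> v \<noteq> m2" using ne uv by auto
    then have "wt u < wt m1 \<or> wt v < wt m2" using uv p q by (auto simp: LTP_def)
    then show "wt m' < wt (m1 @ m2)" using a uv by auto
  qed
  show ?thesis using val len wtc l1 l2 by (simp add: LTP_def)
qed

lemma LTP_der:
  assumes p: "LTP p m c L" and L: "L \<ge> 1"
  shows "LTP (\<lambda>w. mu * (msh p w - p w)) (shw m) (mu * c) L"
proof -
  have lm: "length m = L" using p by (simp add: LTP_def)
  have ps: "p (shw m) = 0"
  proof (rule ccontr)
    assume "p (shw m) \<noteq> 0"
    then have "wt (shw m) \<le> wt m" using LTP_le[OF p] by blast
    then show False using L lm by (simp add: wt_shw)
  qed
  have val: "mu * (msh p (shw m) - p (shw m)) = mu * c" using ps p by (simp add: LTP_def)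
  have len: "\<forall>m'. mu * (msh p m' - p m') \<noteq> 0 \<longrightarrow> length m' = L"
  proof (intro allI impI)
    fix m' assume "mu * (msh p m' - p m') \<noteq> 0"
    then have "msh p m' \<noteq> 0 \<or> p m' \<noteq> 0" by auto
    then show "length m' = L"
    proof
      assume "msh p m' \<noteq> 0"
      then obtain m0 where "m' = shw m0" "p m0 \<noteq> 0" by (auto dest: msh_nz)
      then show ?thesis using p by (simp add: LTP_def)
    next
      assume "p m' \<noteq> 0" then show ?thesis using p by (simp add: LTP_def)
    qed
  qed
  have wtc: "\<forall>m'. mu * (msh p m' - p m') \<noteq> 0 \<longrightarrow> m' \<noteq> shw m \<longrightarrow> wt m' < wt (shw m)"
  proof (intro allI impI)
    fix m' assume nz: "mu * (msh p m' - p m') \<noteq> 0" and ne: "m' \<noteq> shw m"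
    then have "msh p m' \<noteq> 0 \<or> p m' \<noteq> 0" by auto
    then show "wt m' < wt (shw m)"
    proof
      assume "msh p m' \<noteq> 0"
      then obtain m0 where m0: "m' = shw m0" "p m0 \<noteq> 0" by (auto dest: msh_nz)
      then have "m0 \<noteq> m" using ne by auto
      then have "wt m0 < wt m" "length m0 = L" using m0 p by (auto simp: LTP_def)
      then show ?thesis using m0 lm by (simp add: wt_shw)
    next
      assume "p m' \<noteq> 0"
      then have "wt m' \<le> wt m" using LTP_le[OF p] by blast
      then show ?thesis using L lm by (simp add: wt_shw)
    qed
  qed
  show ?thesis using val len wtc lm by (simp add: LTP_def)
qed

lemma LTP_mono: "LTP (cmono [(x, 0)] :: ('x \<times> nat) list \<Rightarrow> 'k::comm_ring_1) [(x, 0)] 1 1"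
  by (auto simp: LTP_def cmono_def split: if_splits)

locale mdlctx =
  fixes X :: "'x set" and lam mu :: "'k::comm_ring_1"
  assumes lmu: "lam * mu = 1"
begin

abbreviation "M \<equiv> (Mdl mu :: ('k, ('x \<times> nat) list \<Rightarrow> 'k) kdalg)"
abbreviation "fm \<equiv> (\<lambda>x. cmono [(x, 0)] :: ('x \<times> nat) list \<Rightarrow> 'k)"

lemma ev_list:
  "\<forall>a\<in>set w. wfl X a \<longrightarrow> LTP (hl M fm a) (LTl a) (mu ^ dcl a) (xcl a) \<and> xcl a \<ge> 1 \<Longrightarrow>
   w \<noteq> [] \<Longrightarrow> list_all (wfl X) w \<Longrightarrow> LTP (hw M fm w) (LTw w) (mu ^ dc w) (xcw w) \<and> xcw w \<ge> 1"
proof (induction w rule: induct_list012)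
  case 1 then show ?case by simp
next
  case (2 a) then show ?case by simp
next
  case (3 a b r)
  have A: "LTP (hl M fm a) (LTl a) (mu ^ dcl a) (xcl a)" "xcl a \<ge> 1" using "3.prems" by auto
  have Bb: "LTP (hw M fm (b # r)) (LTw (b # r)) (mu ^ dc (b # r)) (xcw (b # r))" using "3.IH"(2) "3.prems" by auto
  have "LTP (cmul (hl M fm a) (hw M fm (b # r))) (LTl a @ LTw (b # r)) (mu ^ dcl a * mu ^ dc (b # r)) (xcl a + xcw (b # r))"
    by (rule LTP_cmul[OF A(1) Bb])
  then show ?case using A by (simp add: power_add)
qed

lemma ev_letter: "wfl X a \<Longrightarrow> LTP (hl M fm a) (LTl a) (mu ^ dcl a) (xcl a) \<and> xcl a \<ge> 1"
proof (induction a)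
  case (Lx x) then show ?case using LTP_mono by simp
next
  case (LD w)
  have E: "LTP (hw M fm w) (LTw w) (mu ^ dc w) (xcw w) \<and> xcw w \<ge> 1"
    by (rule ev_list) (use LD in auto)
  then have IH: "LTP (hw M fm w) (LTw w) (mu ^ dc w) (xcw w)" "xcw w \<ge> 1" by auto
  have "LTP (\<lambda>v. mu * (msh (hw M fm w) v - hw M fm w v)) (shw (LTw w)) (mu * mu ^ dc w) (xcw w)"
    by (rule LTP_der[OF IH])
  then show ?case using IH by (simp add: LTl_LD xcl_LD dc_LD)
qed

lemma ev_word: "w \<in> frakS X \<Longrightarrow> LTP (hw M fm w) (LTw w) (mu ^ dc w) (xcw w)"
  using ev_list[of w] ev_letter by (auto simp: frakS_def list_all_iff)

end

section \<open>Injectivity of leading terms on good words\<close>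

lemma LTl_ne: "wfl X a \<Longrightarrow> LTl a \<noteq> []"
proof (induction a)
  case (Lx x) then show ?case by simp
next
  case (LD w) then show ?case by (cases w) (auto simp: LTl_LD shw_def)
qed

lemma LTl_pos: "isD a \<Longrightarrow> allpos (LTl a)"
  by (cases a) (auto simp: LTl_LD)

lemma allpos_hd: "allpos m \<Longrightarrow> m \<noteq> [] \<Longrightarrow> snd (hd m) > 0"
  by (cases m) (auto simp: allpos_def)

lemma LTw_hd_Lx: "w = Lx x # w' \<Longrightarrow> hd (LTw w) = (x, 0)"
  by simp

lemma takeWhile_LT:
  assumes "allpos m" "u = [] \<or> (\<exists>x u'. u = Lx x # u')"
  shows "takeWhile (\<lambda>(x,n). 0 < n) (m @ LTw u) = m" "dropWhile (\<lambda>(x,n). 0 < n) (m @ LTw u) = LTw u"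
  using assms by (auto simp: allpos_def takeWhile_append2 dropWhile_append2)

lemma LT_inj:
  "goodw u \<Longrightarrow> goodw v \<Longrightarrow> list_all (wfl X) u \<Longrightarrow> list_all (wfl X) v \<Longrightarrow> LTw u = LTw v \<Longrightarrow> u = v"
proof (induction "sum_list (map lsz u)" arbitrary: u v rule: less_induct)
  case less
  show ?case
  proof (cases u)
    case Nil
    then show ?thesis using less.prems LTl_ne by (cases v) auto
  next
    case (Cons a u')
    obtain b v' where v: "v = b # v'"
      using less.prems Cons LTl_ne[of X a] by (cases v) auto
    have gu: "goodw u'" "goodw v'" using less.prems Cons v by (auto simp: goodw_Cons)
    have wu: "list_all (wfl X) u'" "list_all (wfl X) v'" using less.prems Cons v by auto
    show ?thesis
    proof (cases a)
      case (Lx x)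
      show ?thesis
      proof (cases b)
        case (Lx y)
        then have "x = y" "LTw u' = LTw v'" using less.prems Cons v \<open>a = Lx x\<close> by auto
        moreover have "sum_list (map lsz u') < sum_list (map lsz u)" using Cons lsz_pos[of a] by simp
        ultimately show ?thesis using less.hyps gu wu Cons v \<open>a = Lx x\<close> Lx by auto
      next
        case (LD z)
        have "LTl b \<noteq> []" using wu less.prems v LTl_ne[of X b] by auto
        then have "snd (hd (LTw v)) > 0" using LTl_pos[of b] LD v allpos_hd by simp
        moreover have "snd (hd (LTw u)) = 0" using Cons \<open>a = Lx x\<close> by simp
        ultimately show ?thesis using less.prems by simp
      qed
    next
      case (LD z)
      show ?thesis
      proof (cases b)
        case (Lx y)
        have "LTl a \<noteq> []" using less.prems Cons LTl_ne[of X a] by auto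
        then have "snd (hd (LTw u)) > 0" using LTl_pos[of a] LD Cons allpos_hd by simp
        moreover have "snd (hd (LTw v)) = 0" using v Lx by simp
        ultimately show ?thesis using less.prems by simp
      next
        case (LD z')
        have nu: "u' = [] \<or> (\<exists>x u''. u' = Lx x # u'')"
          using less.prems(1) Cons \<open>a = LD z\<close> by (cases u'; cases "hd u'") (auto simp: goodw_Cons)
        have nv: "v' = [] \<or> (\<exists>x v''. v' = Lx x # v'')"
          using less.prems(2) v LD by (cases v'; cases "hd v'") (auto simp: goodw_Cons)
        have eqs: "shw (LTw z) @ LTw u' = shw (LTw z') @ LTw v'"
          using less.prems(5) Cons v \<open>a = LD z\<close> LD by (simp add: LTl_LD)
        have "shw (LTw z) = shw (LTw z')"
          using takeWhile_LT(1)[OF allpos_shw nu, of "LTw z"] takeWhile_LT(1)[OF allpos_shw nv, of "LTw z'"] eqs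
          by metis
        then have ez: "LTw z = LTw z'" by (rule shw_inj)
        have ew: "LTw u' = LTw v'"
          using takeWhile_LT(2)[OF allpos_shw nu, of "LTw z"] takeWhile_LT(2)[OF allpos_shw nv, of "LTw z'"] eqs
          by metis
        have gz: "goodw z" "goodw z'" "list_all (wfl X) z" "list_all (wfl X) z'"
          using less.prems Cons v \<open>a = LD z\<close> LD by (auto simp: goodw_Cons goodw_def)
        have "sum_list (map lsz z) < sum_list (map lsz u)" using Cons \<open>a = LD z\<close> by simp
        then have "z = z'" using less.hyps gz ez by blast
        moreover have "sum_list (map lsz u') < sum_list (map lsz u)" using Cons lsz_pos[of a] by simp
        then have "u' = v'" using less.hyps gu wu ew by blast
        ultimately show ?thesis using Cons v \<open>a = LD z\<close> LD by simp
      qed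
    qed
  qed
qed


lemma sum_list_single:
  assumes "distinct (map fst ps)" "(w0, k0) \<in> set ps" "\<forall>(w,k)\<in>set ps. w \<noteq> w0 \<longrightarrow> g (w,k) = (0::'a::comm_monoid_add)"
  shows "sum_list (map g ps) = g (w0, k0)"
  using assms
proof (induction ps)
  case Nil then show ?case by simp
next
  case (Cons p ps)
  obtain w k where p: "p = (w, k)" by (cases p)
  show ?case
  proof (cases "w = w0")
    case True
    then have "k = k0" "(w0, k0) \<notin> set ps \<or> True" using Cons.prems p by (auto simp: image_iff)
    moreover have "\<forall>(w',k')\<in>set ps. w' \<noteq> w0" using Cons.prems(1) p True by (auto simp: image_iff)
    then have "sum_list (map g ps) = 0" using Cons.prems(3) by (induction ps) auto
    ultimately show ?thesis using p True by simp
  next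
    case False
    then have "(w0, k0) \<in> set ps" using Cons.prems p by auto
    then have "sum_list (map g ps) = g (w0, k0)" using Cons by auto
    then show ?thesis using p False Cons.prems(3) by simp
  qed
qed

context mdlctx
begin

lemma fm_c: "finite {w. fm x w \<noteq> 0}"
proof -
  have "{w. fm x w \<noteq> 0} \<subseteq> {[(x,0)]}" by (auto simp: cmono_def split: if_splits)
  then show ?thesis by (rule finite_subset) simp
qed

lemma indep:
  assumes d: "distinct (map fst ps)" and g: "fst ` set ps \<subseteq> goodS X"
    and I: "plist ps \<in> IdT X (Tset X mu)"
  shows "\<forall>(w,k)\<in>set ps. k = 0"
proof -
  interpret u: univctx M lam fm X mu
    by unfold_locales (auto simp: Mdl_lda[OF lmu] lmu fm_c)
  have fS: "fst ` set ps \<subseteq> frakS X" using g by (auto simp: goodS_def)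
  have hvp: "fst ` set qs \<subseteq> frakS X \<Longrightarrow> u.hv (plist qs) = (\<lambda>m. sum_list (map (\<lambda>(w,k). k * hw M fm w m) qs))" for qs
  proof (induction qs rule: plist.induct)
    case 1 then show ?case by (simp add: u.hv_zero)
  next
    case (2 w k qs)
    then have "plist qs \<in> KXD X" "w \<in> frakS X" by (auto intro: plist_KXD)
    then show ?case using 2 by (simp add: u.hv_add u.hv_smul u.hv_mono KXD_closed)
  qed
  have zero: "\<forall>m. sum_list (map (\<lambda>(w,k). k * hw M fm w m) ps) = 0"
    using hvp[OF fS] u.hv_IdT[OF I] by (metis Mdl_simps(3))
  show ?thesis
  proof (rule ccontr)
    assume "\<not> (\<forall>(w,k)\<in>set ps. k = 0)"
    then have ne: "{p \<in> set ps. snd p \<noteq> 0} \<noteq> {}" by auto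
    let ?S = "{p \<in> set ps. snd p \<noteq> 0}"
    let ?f = "\<lambda>p. wt (LTw (fst p))"
    have finS: "finite ?S" by simp
    have "Max (?f ` ?S) \<in> ?f ` ?S" using finS ne by (intro Max_in) auto
    then obtain p0 where p0a: "p0 \<in> ?S" "?f p0 = Max (?f ` ?S)" by auto
    have "\<forall>p\<in>?S. ?f p \<le> ?f p0" using p0a(2) finS by auto
    note p0 = p0a(1) this
    obtain w0 k0 where wk0: "p0 = (w0, k0)" by (cases p0)
    have w0g: "w0 \<in> goodS X" using p0 wk0 g by force
    let ?m0 = "LTw w0"
    have LT0: "LTP (hw M fm w0) ?m0 (mu ^ dc w0) (xcw w0)" using w0g by (intro ev_word) (simp add: goodS_def)
    have others: "\<forall>(w,k)\<in>set ps. w \<noteq> w0 \<longrightarrow> k * hw M fm w ?m0 = 0"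
    proof (intro ballI impI, clarify)
      fix w k assume wk: "(w, k) \<in> set ps" "w \<noteq> w0"
      show "k * hw M fm w ?m0 = 0"
      proof (rule ccontr)
        assume nz: "k * hw M fm w ?m0 \<noteq> 0"
        then have k: "k \<noteq> 0" and e: "hw M fm w ?m0 \<noteq> 0" by auto
        have wg: "w \<in> goodS X" using wk g by force
        have LTw: "LTP (hw M fm w) (LTw w) (mu ^ dc w) (xcw w)" using wg by (intro ev_word) (simp add: goodS_def)
        have "?m0 \<noteq> LTw w"
        proof
          assume "?m0 = LTw w"
          then have "w0 = w" using w0g wg
            by (intro LT_inj[of w0 w X]) (auto simp: goodS_def frakS_def)
          then show False using wk by simp
        qed
        then have "wt ?m0 < wt (LTw w)" using LTw e by (auto simp: LTP_def)
        moreover have "(w, k) \<in> ?S" using wk k by auto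
        then have "wt (LTw w) \<le> wt ?m0" using p0 wk0 by force
        ultimately show False by simp
      qed
    qed
    have "sum_list (map (\<lambda>(w,k). k * hw M fm w ?m0) ps) = k0 * hw M fm w0 ?m0"
      using sum_list_single[OF d, of w0 k0 "\<lambda>(w,k). k * hw M fm w ?m0"] p0 wk0 others by auto
    then have "k0 * mu ^ dc w0 = 0" using zero LT0 by (simp add: LTP_def)
    then have "k0 * mu ^ dc w0 * lam ^ dc w0 = 0" by simp
    then have "k0 * (lam * mu) ^ dc w0 = 0" by (simp add: power_mult_distrib algebra_simps)
    then have "k0 = 0" using lmu by simp
    then show False using p0 wk0 by simp
  qed
qed

end

context qctx
begin

lemma lincomb_C: "fst ` set ps \<subseteq> frakS X \<Longrightarrow> lincomb Q (\<lambda>w. C (pmono w)) ps = C (plist ps)"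
proof (induction ps rule: plist.induct)
  case 1 then show ?case by (simp add: lincomb_def Q_ops)
next
  case (2 w k ps)
  then have "plist ps \<in> KXD X" "w \<in> frakS X" by (auto intro: plist_KXD)
  then show ?case using 2 by (simp add: lincomb_def Q_ops KXD_closed)
qed

end

theorem theorem5p8:
  fixes X :: "'x set" and lam mu :: "'k::comm_ring_1"
  assumes "lam * mu = 1"
  shows "free_lda TYPE('r) lam (KXDT X mu) X (\<lambda>x. cls X (IdT X (Tset X mu)) (pmono [Lx x]))
       \<and> is_kbasis (KXDT X mu) (Phi X) (\<lambda>w. cls X (IdT X (Tset X mu)) (pmono w))"
proof
  show "free_lda TYPE('r) lam (KXDT X mu) X (\<lambda>x. cls X (IdT X (Tset X mu)) (pmono [Lx x]))"
    by (rule free_part[OF assms])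
  interpret q: qctx X "IdT X (Tset X mu)" lam by (rule qctx_IdT[OF assms])
  interpret s: spanctx X lam mu by unfold_locales (rule assms)
  interpret m: mdlctx X lam mu by unfold_locales (rule assms)
  have PhiS: "Phi X = goodS X" by (rule Phi_eq)
  show "is_kbasis (KXDT X mu) (Phi X) (\<lambda>w. q.C (pmono w))"
    unfolding is_kbasis_def KXDT_def
  proof (intro conjI ballI allI impI)
    fix i assume "i \<in> Phi X"
    then show "q.C (pmono i) \<in> carrier q.Q" using PhiS by (auto intro!: q.C_in KXD_pmono simp: goodS_def)
  next
    fix a assume "a \<in> carrier q.Q"
    then obtain p where p: "p \<in> KXD X" "a = q.C p" by (auto simp: q.Q_carrier)
    obtain ps where ps: "fst ` set ps \<subseteq> goodS X" "psub p (plist ps) \<in> IdT X (Tset X mu)"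
      using s.spanning[OF p(1)] by blast
    have fS: "fst ` set ps \<subseteq> frakS X" using ps by (auto simp: goodS_def)
    have "q.C p = q.C (plist ps)" using ps p fS by (simp add: q.cls_eq plist_KXD)
    then have "a = lincomb q.Q (\<lambda>w. q.C (pmono w)) ps" using p q.lincomb_C[OF fS] by simp
    moreover have "set (map fst ps) \<subseteq> Phi X" using ps PhiS by auto
    ultimately show "\<exists>ps. set (map fst ps) \<subseteq> Phi X \<and> a = lincomb q.Q (\<lambda>w. q.C (pmono w)) ps" by blast
  next
    fix ps :: "('x letter list \<times> 'k) list" and ik
    assume h: "distinct (map fst ps) \<and> set (map fst ps) \<subseteq> Phi X \<and> lincomb q.Q (\<lambda>w. q.C (pmono w)) ps = zero q.Q"
      and ik: "ik \<in> set ps"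
    have g: "fst ` set ps \<subseteq> goodS X" using h PhiS by auto
    have fS: "fst ` set ps \<subseteq> frakS X" using g by (auto simp: goodS_def)
    have "q.C (plist ps) = q.C pzero" using h q.lincomb_C[OF fS] by (simp add: q.Q_ops)
    then have "psub (plist ps) pzero \<in> IdT X (Tset X mu)" using fS by (simp add: q.cls_eq plist_KXD)
    moreover have "psub (plist ps) pzero = plist ps" by (simp add: psub_def pzero_def)
    ultimately have "plist ps \<in> IdT X (Tset X mu)" by simp
    then have "\<forall>(w,k)\<in>set ps. k = 0" using h g by (intro m.indep) auto
    then show "case ik of (i, k) \<Rightarrow> k = 0" using ik by auto
  qed
qed


end
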